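(* Let $R$ be an $n\times n$ nonnegative matrix with entrywise positive left and right eigenvectors $u$ and $v$ for the PF eigenvalue $1$, normalized so that $\langle u,v\rangle=1$, and let $\kappa=\min_iu_iv_i$. Then for every $0<\epsilon<1$ the mixing time of the continuous-time operator satisfies \[ \frac{\frac12-\epsilon}{\phi(R)}\le\tau_\epsilon(\exp(R-I))\le\frac{100\cdot\ln\!\left(\frac{n}{\kappa\cdot\epsilon}\right)}{\phi^2(R)}. \]
   Context: $\exp(M)=\sum_{i\ge0}M^i/i!$. The continuous mixing time $\tau_\epsilon(\exp(R-I))$ is the infimum of real $t\ge0$ such that $\|D_u(\exp(t(R-I))-vu^T)x\|_1\le\epsilon$ for every real $x$ with $\|D_ux\|_1=1$, where $D_u$ is the diagonal matrix with $u$ on the diagonal. $\phi(R)=\min\phi_S(R)$ over nonempty $S\subseteq[n]$ with $\sum_{i\in S}u_iv_i\le\frac12$, where $\phi_S(R)=\langle\mathbf 1_S,D_uRD_v\mathbf 1_{\overline S}\rangle/\langle\mathbf 1_S,D_uRD_v\mathbf 1\rangle$ and $\mathbf 1_S$ is the indicator vector of $S$ (bounds with $\phi(R)=0$ are read as $+\infty$). *)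

theory Defs
  imports "HOL-Analysis.Analysis"
begin

text \<open>n x n real matrices are represented as functions nat => nat => real,
  only the entries with indices below n being relevant; vectors as nat => real.\<close>

definition id_mat :: "nat \<Rightarrow> nat \<Rightarrow> real" where
  "id_mat i j = (if i = j then 1 else 0)"

definition mat_mult :: "nat \<Rightarrow> (nat \<Rightarrow> nat \<Rightarrow> real) \<Rightarrow> (nat \<Rightarrow> nat \<Rightarrow> real) \<Rightarrow> nat \<Rightarrow> nat \<Rightarrow> real" where
  "mat_mult n A B i j = (\<Sum>k<n. A i k * B k j)"

fun mat_pow :: "nat \<Rightarrow> (nat \<Rightarrow> nat \<Rightarrow> real) \<Rightarrow> nat \<Rightarrow> nat \<Rightarrow> nat \<Rightarrow> real" where
  "mat_pow n A 0 = id_mat"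
| "mat_pow n A (Suc k) = mat_mult n (mat_pow n A k) A"

definition mat_exp :: "nat \<Rightarrow> (nat \<Rightarrow> nat \<Rightarrow> real) \<Rightarrow> nat \<Rightarrow> nat \<Rightarrow> real" where
  "mat_exp n M i j = (\<Sum>k. mat_pow n M k i j / fact k)"

text \<open>Continuous mixing time tau_eps(exp(R - I)); infimum over the empty set is +infinity.\<close>
definition mixing_time_cont ::
  "nat \<Rightarrow> (nat \<Rightarrow> nat \<Rightarrow> real) \<Rightarrow> (nat \<Rightarrow> real) \<Rightarrow> (nat \<Rightarrow> real) \<Rightarrow> real \<Rightarrow> ereal" where
  "mixing_time_cont n R u v \<epsilon> = Inf (ereal ` {t. t \<ge> 0 \<and>
     (\<forall>x :: nat \<Rightarrow> real. (\<Sum>i<n. \<bar>u i * x i\<bar>) = 1 \<longrightarrow>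
        (\<Sum>i<n. \<bar>u i * (\<Sum>j<n. (mat_exp n (\<lambda>a b. t * (R a b - id_mat a b)) i j - v i * u j) * x j)\<bar>) \<le> \<epsilon>)})"

definition edge_expansion_set ::
  "nat \<Rightarrow> (nat \<Rightarrow> nat \<Rightarrow> real) \<Rightarrow> (nat \<Rightarrow> real) \<Rightarrow> (nat \<Rightarrow> real) \<Rightarrow> nat set \<Rightarrow> real" where
  "edge_expansion_set n R u v S =
     (\<Sum>i\<in>S. \<Sum>j\<in>{..<n} - S. u i * R i j * v j) / (\<Sum>i\<in>S. \<Sum>j<n. u i * R i j * v j)"

text \<open>phi(R); as an extended real, with the (only for n = 1 occurring) empty minimum read as +infinity.\<close>
definition edge_expansion ::
  "nat \<Rightarrow> (nat \<Rightarrow> nat \<Rightarrow> real) \<Rightarrow> (nat \<Rightarrow> real) \<Rightarrow> (nat \<Rightarrow> real) \<Rightarrow> ereal" where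
  "edge_expansion n R u v = Inf {ereal (edge_expansion_set n R u v S) | S.
      S \<noteq> {} \<and> S \<subseteq> {..<n} \<and> (\<Sum>i\<in>S. u i * v i) \<le> 1/2}"

end

theory Submission
  imports Defs
begin

definition mv :: "nat \<Rightarrow> (nat \<Rightarrow> nat \<Rightarrow> real) \<Rightarrow> (nat \<Rightarrow> real) \<Rightarrow> nat \<Rightarrow> real" where
  "mv n A x i = (\<Sum>j<n. A i j * x j)"

lemma binom_step:
  fixes c :: real and a :: "nat \<Rightarrow> real"
  shows "(\<Sum>m\<le>Suc k. of_nat (Suc k choose m) * c^(Suc k - m) * a m) =
    (\<Sum>m\<le>k. of_nat (k choose m) * c^(k-m) * a (Suc m)) + c * (\<Sum>m\<le>k. of_nat (k choose m) * c^(k-m) * a m)"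
proof -
  have "(\<Sum>m\<le>Suc k. of_nat (Suc k choose m) * c^(Suc k - m) * a m) =
     c^(Suc k) * a 0 + (\<Sum>m\<le>k. of_nat (Suc k choose Suc m) * c^(k - m) * a (Suc m))"
    by (subst sum.atMost_Suc_shift) simp
  also have "(\<Sum>m\<le>k. of_nat (Suc k choose Suc m) * c^(k - m) * a (Suc m)) =
     (\<Sum>m\<le>k. of_nat (k choose m) * c^(k - m) * a (Suc m)) + (\<Sum>m\<le>k. of_nat (k choose Suc m) * c^(k - m) * a (Suc m))"
    by (simp add: sum.distrib algebra_simps)
  also have "(\<Sum>m\<le>k. of_nat (k choose Suc m) * c^(k - m) * a (Suc m)) =
      (\<Sum>m\<le>Suc k. of_nat (k choose m) * c^(Suc k - m) * a m) - c^(Suc k) * a 0"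
    by (subst sum.atMost_Suc_shift) simp
  also have "(\<Sum>m\<le>Suc k. of_nat (k choose m) * c^(Suc k - m) * a m) = (\<Sum>m\<le>k. of_nat (k choose m) * c^(Suc k - m) * a m)"
    by simp
  also have "\<dots> = c * (\<Sum>m\<le>k. of_nat (k choose m) * c^(k-m) * a m)"
    unfolding sum_distrib_left
    by (rule sum.cong) (auto simp: Suc_diff_le)
  finally show ?thesis by simp
qed

lemma mat_pow_scale: "mat_pow n (\<lambda>a b. s * B a b) k i j = s^k * mat_pow n B k i j"
proof (induction k arbitrary: j)
  case 0 then show ?case by simp
next
  case (Suc k) then show ?case
    by (simp add: mat_mult_def sum_distrib_left algebra_simps)
qed

lemma mat_pow_binom:
  assumes "j < n"
  shows "mat_pow n (\<lambda>a b. Y a b + c * id_mat a b) k i j = (\<Sum>m\<le>k. of_nat (k choose m) * c^(k-m) * mat_pow n Y m i j)"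
  using assms
proof (induction k arbitrary: j)
  case 0 then show ?case by simp
next
  case (Suc k)
  have "mat_pow n (\<lambda>a b. Y a b + c * id_mat a b) (Suc k) i j =
     (\<Sum>l<n. mat_pow n (\<lambda>a b. Y a b + c * id_mat a b) k i l * Y l j) + c * mat_pow n (\<lambda>a b. Y a b + c * id_mat a b) k i j"
  proof -
    let ?Z = "mat_pow n (\<lambda>a b. Y a b + c * id_mat a b) k"
    have "mat_pow n (\<lambda>a b. Y a b + c * id_mat a b) (Suc k) i j = (\<Sum>l<n. ?Z i l * (Y l j + c * id_mat l j))"
      by (simp add: mat_mult_def)
    also have "\<dots> = (\<Sum>l<n. ?Z i l * Y l j) + c * (\<Sum>l<n. ?Z i l * id_mat l j)"
      by (simp add: distrib_left sum.distrib sum_distrib_left algebra_simps)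
    also have "(\<Sum>l<n. ?Z i l * id_mat l j) = ?Z i j"
      using Suc.prems by (simp add: id_mat_def if_distrib cong: if_cong)
    finally show ?thesis .
  qed
  also have "(\<Sum>l<n. mat_pow n (\<lambda>a b. Y a b + c * id_mat a b) k i l * Y l j) =
      (\<Sum>l<n. (\<Sum>m\<le>k. of_nat (k choose m) * c^(k-m) * mat_pow n Y m i l) * Y l j)"
    using Suc.IH by simp
  also have "\<dots> = (\<Sum>m\<le>k. of_nat (k choose m) * c^(k-m) * mat_pow n Y (Suc m) i j)"
    by (simp add: mat_mult_def sum_distrib_left sum_distrib_right sum.swap[of _ "{..<n}"] mult.assoc)
  finally show ?case using Suc.IH[OF Suc.prems] binom_step[where c=c and a="\<lambda>m. mat_pow n Y m i j" and k=k] by simp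
qed

lemma mat_pow_bound:
  assumes "j < n"
  shows "\<bar>mat_pow n B k i j\<bar> \<le> (\<Sum>a<n. \<Sum>b<n. \<bar>B a b\<bar>) ^ k"
  using assms
proof (induction k arbitrary: j)
  case 0 then show ?case by (simp add: id_mat_def)
next
  case (Suc k)
  let ?C = "(\<Sum>a<n. \<Sum>b<n. \<bar>B a b\<bar>)"
  have "\<bar>mat_pow n B (Suc k) i j\<bar> \<le> (\<Sum>l<n. \<bar>mat_pow n B k i l\<bar> * \<bar>B l j\<bar>)"
    by (simp add: mat_mult_def abs_mult[symmetric] sum_abs)
  also have "\<dots> \<le> (\<Sum>l<n. ?C^k * \<bar>B l j\<bar>)"
    by (intro sum_mono mult_right_mono) (auto intro: Suc.IH)
  also have "\<dots> = ?C^k * (\<Sum>l<n. \<bar>B l j\<bar>)" by (simp add: sum_distrib_left)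
  also have "(\<Sum>l<n. \<bar>B l j\<bar>) \<le> ?C"
  proof -
    have "(\<Sum>l<n. \<bar>B l j\<bar>) = (\<Sum>l<n. \<Sum>b\<in>{j}. \<bar>B l b\<bar>)" by simp
    also have "\<dots> \<le> ?C" by (intro sum_mono sum_mono2) (use Suc.prems in auto)
    finally show ?thesis .
  qed
  hence "?C^k * (\<Sum>l<n. \<bar>B l j\<bar>) \<le> ?C^k * ?C" by (intro mult_left_mono) (auto intro!: sum_nonneg zero_le_power)
  finally show ?case by (simp add: mult.commute)
qed

lemma exp_series_summable:
  assumes "j < n"
  shows "summable (\<lambda>m. \<bar>s^m / fact m * mat_pow n B m i j\<bar>)"
proof -
  let ?C = "(\<Sum>a<n. \<Sum>b<n. \<bar>B a b\<bar>)"
  have "summable (\<lambda>m. (\<bar>s\<bar> * ?C)^m / fact m)"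
    using summable_exp[of "\<bar>s\<bar> * ?C"] by (simp add: divide_inverse mult.commute)
  then show ?thesis
  proof (rule summable_comparison_test'[where N=0])
    fix m :: nat
    have "\<bar>mat_pow n B m i j\<bar> \<le> ?C^m" by (rule mat_pow_bound[OF assms])
    then have "\<bar>s\<bar>^m * \<bar>mat_pow n B m i j\<bar> \<le> \<bar>s\<bar>^m * ?C^m" by (intro mult_left_mono) auto
    then show "norm \<bar>s^m / fact m * mat_pow n B m i j\<bar> \<le> (\<bar>s\<bar> * ?C)^m / fact m"
      by (simp add: abs_mult power_abs power_mult_distrib divide_right_mono)
  qed
qed

lemma mat_exp_shift:
  assumes "j < n"
  shows "mat_exp n (\<lambda>a b. s * (B a b - id_mat a b)) i j = exp (-s) * (\<Sum>m. s^m / fact m * mat_pow n B m i j)"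
proof -
  have eq: "(\<lambda>a b. s * (B a b - id_mat a b)) = (\<lambda>a b. (\<lambda>a b. s * B a b) a b + (-s) * id_mat a b)"
    by (auto simp: algebra_simps)
  have "mat_exp n (\<lambda>a b. s * (B a b - id_mat a b)) i j =
     (\<Sum>k. (\<Sum>m\<le>k. of_nat (k choose m) * (-s)^(k-m) * (s^m * mat_pow n B m i j)) / fact k)"
    unfolding mat_exp_def eq mat_pow_binom[OF assms] mat_pow_scale ..
  also have "\<dots> = (\<Sum>k. \<Sum>m\<le>k. (s^m / fact m * mat_pow n B m i j) * ((-s)^(k-m) / fact (k - m)))"
    by (intro suminf_cong) (auto simp: sum_divide_distrib binomial_fact intro!: sum.cong)
  also have "\<dots> = (\<Sum>m. s^m / fact m * mat_pow n B m i j) * (\<Sum>k. (-s)^k / fact k)"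
  proof (rule Cauchy_product[symmetric])
    show "summable (\<lambda>k. norm (s^k / fact k * mat_pow n B k i j))"
      using exp_series_summable[OF assms] by simp
    have "summable (\<lambda>k. \<bar>s\<bar>^k / fact k)"
      using summable_exp[of "\<bar>s\<bar>"] by (simp add: divide_inverse mult.commute)
    then show "summable (\<lambda>k. norm ((-s)^k / fact k))"
      by (simp add: power_abs)
  qed
  also have "(\<Sum>k. (-s)^k / fact k) = exp (-s)"
    using exp_converges[of "-s"] by (simp add: sums_iff divide_inverse mult.commute)
  finally show ?thesis by simp
qed



locale chain =
  fixes n :: nat and R :: "nat \<Rightarrow> nat \<Rightarrow> real" and u v :: "nat \<Rightarrow> real"
  assumes nonneg: "\<forall>i<n. \<forall>j<n. R i j \<ge> 0"
    and u_pos: "\<forall>i<n. u i > 0" and v_pos: "\<forall>i<n. v i > 0"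
    and left_eig: "\<forall>j<n. (\<Sum>i<n. u i * R i j) = u j"
    and right_eig: "\<forall>i<n. (\<Sum>j<n. R i j * v j) = v i"
    and normalized: "(\<Sum>i<n. u i * v i) = 1"
begin

definition "pm i = u i * v i"
definition "Q i j = u i * R i j * v j"
definition "P f i = (\<Sum>j<n. R i j * v j * f j) / v i"
definition "T f i = (f i + P f i) / 2"
definition "nrm f = (\<Sum>i<n. pm i * (f i)^2)"
definition "mean f = (\<Sum>i<n. pm i * f i)"
definition "Ed f = (\<Sum>i<n. \<Sum>j<n. Q i j * (f i - f j)^2) / 2"

lemma pm_pos: "i < n \<Longrightarrow> pm i > 0"
  using u_pos v_pos by (simp add: pm_def)

lemma Q_nonneg: "i < n \<Longrightarrow> j < n \<Longrightarrow> Q i j \<ge> 0"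
proof -
  assume "i < n" "j < n"
  then have "u i \<ge> 0" "v j \<ge> 0" "R i j \<ge> 0" using u_pos v_pos nonneg by (auto simp: less_imp_le)
  then show ?thesis by (simp add: Q_def)
qed

lemma Q_row: "i < n \<Longrightarrow> (\<Sum>j<n. Q i j) = pm i"
  using right_eig by (simp add: Q_def pm_def mult.assoc sum_distrib_left[symmetric])

lemma Q_col: "j < n \<Longrightarrow> (\<Sum>i<n. Q i j) = pm j"
  using left_eig by (simp add: Q_def pm_def sum_distrib_right[symmetric])

lemma sum_pm: "(\<Sum>i<n. pm i) = 1"
  using normalized by (simp add: pm_def)

lemma P_cong: "(\<And>j. j < n \<Longrightarrow> f j = g j) \<Longrightarrow> P f i = P g i"
  by (simp add: P_def)

lemma T_cong: "(\<And>j. j < n \<Longrightarrow> f j = g j) \<Longrightarrow> i < n \<Longrightarrow> T f i = T g i"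
  using P_cong[of f g i] by (simp add: T_def)

lemma P_const: "i < n \<Longrightarrow> P (\<lambda>j. f j + c) i = P f i + c"
proof -
  assume i: "i < n"
  have "(\<Sum>j<n. R i j * v j * (f j + c)) = (\<Sum>j<n. R i j * v j * f j) + (\<Sum>j<n. R i j * v j) * c"
    by (simp add: distrib_left sum.distrib sum_distrib_right)
  moreover have "v i > 0" using v_pos i by auto
  moreover have "(\<Sum>j<n. R i j * v j) = v i" using right_eig i by auto
  ultimately show ?thesis by (simp add: P_def add_divide_distrib)
qed

lemma T_const: "i < n \<Longrightarrow> T (\<lambda>j. f j + c) i = T f i + c"
  using P_const by (simp add: T_def)

lemma P_lin: "P (\<lambda>j. f j - g j) i = P f i - P g i"
  by (simp add: P_def right_diff_distrib sum_subtractf diff_divide_distrib)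

lemma P_bounds:
  assumes "\<And>j. j < n \<Longrightarrow> a \<le> f j \<and> f j \<le> b" "i < n"
  shows "a \<le> P f i \<and> P f i \<le> b"
proof -
  have vi: "v i > 0" using v_pos assms(2) by auto
  have "(\<Sum>j<n. R i j * v j * a) \<le> (\<Sum>j<n. R i j * v j * f j)"
    using assms nonneg v_pos by (intro sum_mono mult_left_mono) auto
  moreover have "(\<Sum>j<n. R i j * v j * a) = v i * a"
    using right_eig assms(2) by (simp add: sum_distrib_right[symmetric])
  moreover have "(\<Sum>j<n. R i j * v j * f j) \<le> (\<Sum>j<n. R i j * v j * b)"
    using assms nonneg v_pos by (intro sum_mono mult_left_mono) auto
  moreover have "(\<Sum>j<n. R i j * v j * b) = v i * b"
    using right_eig assms(2) by (simp add: sum_distrib_right[symmetric])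
  ultimately show ?thesis using vi by (simp add: P_def field_simps)
qed

lemma T_bounds:
  assumes "\<And>j. j < n \<Longrightarrow> a \<le> f j \<and> f j \<le> b" "i < n"
  shows "a \<le> T f i \<and> T f i \<le> b"
  using P_bounds[OF assms] assms by (force simp: T_def)

lemma mean_P: "mean (P f) = mean f"
proof -
  have "mean (P f) = (\<Sum>i<n. u i * (\<Sum>j<n. R i j * v j * f j))"
    unfolding mean_def pm_def P_def using v_pos by (intro sum.cong) auto
  also have "\<dots> = (\<Sum>i<n. \<Sum>j<n. u i * R i j * (v j * f j))"
    by (simp add: sum_distrib_left mult.assoc)
  also have "\<dots> = (\<Sum>j<n. \<Sum>i<n. u i * R i j * (v j * f j))"
    by (rule sum.swap)
  also have "\<dots> = (\<Sum>j<n. (\<Sum>i<n. u i * R i j) * (v j * f j))"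
    by (simp add: sum_distrib_right)
  also have "\<dots> = mean f" using left_eig by (simp add: mean_def pm_def mult.assoc)
  finally show ?thesis .
qed

lemma mean_T: "mean (T f) = mean f"
proof -
  have "mean (T f) = (mean f + mean (P f)) / 2"
    unfolding mean_def T_def by (simp add: sum_divide_distrib[symmetric] distrib_left sum.distrib)
  then show ?thesis using mean_P[of f] by simp
qed

lemma nrm_nonneg: "nrm f \<ge> 0"
  unfolding nrm_def using pm_pos by (intro sum_nonneg) (simp add: less_imp_le)

lemma nrm_P: "nrm (P f) \<le> nrm f"
proof -
  have "pm i * (P f i)^2 \<le> u i * (\<Sum>j<n. R i j * v j * (f j)^2)" if i: "i < n" for i
  proof -
    have vi: "v i > 0" and ui: "u i > 0" using v_pos u_pos i by auto
    have "(\<Sum>j<n. sqrt (R i j * v j) * (sqrt (R i j * v j) * f j))^2 \<le>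
        (\<Sum>j<n. (sqrt (R i j * v j))^2) * (\<Sum>j<n. (sqrt (R i j * v j) * f j)^2)"
      by (rule Cauchy_Schwarz_ineq_sum)
    moreover have "(\<Sum>j<n. sqrt (R i j * v j) * (sqrt (R i j * v j) * f j)) = (\<Sum>j<n. R i j * v j * f j)"
      using nonneg v_pos i by (intro sum.cong) (auto simp: mult.assoc[symmetric] less_imp_le)
    moreover have "(\<Sum>j<n. (sqrt (R i j * v j))^2) = v i"
      using nonneg v_pos i right_eig by (auto simp: less_imp_le)
    moreover have "(\<Sum>j<n. (sqrt (R i j * v j) * f j)^2) = (\<Sum>j<n. R i j * v j * (f j)^2)"
      using nonneg v_pos i by (intro sum.cong) (auto simp: power_mult_distrib less_imp_le)
    ultimately have cs: "(\<Sum>j<n. R i j * v j * f j)^2 \<le> v i * (\<Sum>j<n. R i j * v j * (f j)^2)" by simp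
    have "pm i * (P f i)^2 = (u i / v i) * (\<Sum>j<n. R i j * v j * f j)^2"
      using vi by (simp add: pm_def P_def power2_eq_square field_simps)
    also have "\<dots> \<le> (u i / v i) * (v i * (\<Sum>j<n. R i j * v j * (f j)^2))"
      using cs ui vi by (intro mult_left_mono) auto
    also have "\<dots> = u i * (\<Sum>j<n. R i j * v j * (f j)^2)" using vi by simp
    finally show ?thesis .
  qed
  hence "nrm (P f) \<le> (\<Sum>i<n. u i * (\<Sum>j<n. R i j * v j * (f j)^2))"
    unfolding nrm_def by (intro sum_mono) auto
  also have "\<dots> = (\<Sum>i<n. \<Sum>j<n. u i * R i j * (v j * (f j)^2))"
    by (simp add: sum_distrib_left mult.assoc)
  also have "\<dots> = (\<Sum>j<n. \<Sum>i<n. u i * R i j * (v j * (f j)^2))"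
    by (rule sum.swap)
  also have "\<dots> = (\<Sum>j<n. (\<Sum>i<n. u i * R i j) * (v j * (f j)^2))"
    by (simp add: sum_distrib_right)
  also have "\<dots> = nrm f" using left_eig by (simp add: nrm_def pm_def mult.assoc)
  finally show ?thesis .
qed

lemma cross_eq: "(\<Sum>i<n. pm i * f i * P f i) = (\<Sum>i<n. \<Sum>j<n. Q i j * f i * f j)"
proof (intro sum.cong refl)
  fix i assume "i \<in> {..<n}"
  then have vi: "v i > 0" using v_pos by auto
  have "pm i * f i * P f i = u i * f i * (\<Sum>j<n. R i j * v j * f j)"
    using vi by (simp add: pm_def P_def)
  also have "\<dots> = (\<Sum>j<n. Q i j * f i * f j)"
    by (simp add: Q_def sum_distrib_left mult.assoc mult.left_commute)
  finally show "pm i * f i * P f i = (\<Sum>j<n. Q i j * f i * f j)" .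
qed

lemma Ed_eq: "Ed f = nrm f - (\<Sum>i<n. \<Sum>j<n. Q i j * f i * f j)"
proof -
  have e: "Q i j * (f i - f j)^2 = Q i j * (f i)^2 + Q i j * (f j)^2 - 2 * (Q i j * f i * f j)" for i j
    by (simp add: power2_eq_square algebra_simps)
  have "(\<Sum>i<n. \<Sum>j<n. Q i j * (f i - f j)^2) =
     (\<Sum>i<n. \<Sum>j<n. Q i j * (f i)^2) + (\<Sum>i<n. \<Sum>j<n. Q i j * (f j)^2) - 2 * (\<Sum>i<n. \<Sum>j<n. Q i j * f i * f j)"
    unfolding e by (simp add: sum.distrib sum_subtractf sum_distrib_left)
  also have "(\<Sum>i<n. \<Sum>j<n. Q i j * (f i)^2) = nrm f"
    unfolding nrm_def by (intro sum.cong) (simp_all add: sum_distrib_right[symmetric] Q_row)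
  also have "(\<Sum>i<n. \<Sum>j<n. Q i j * (f j)^2) = (\<Sum>j<n. \<Sum>i<n. Q i j * (f j)^2)"
    by (rule sum.swap)
  also have "\<dots> = nrm f"
    unfolding nrm_def by (intro sum.cong) (simp_all add: sum_distrib_right[symmetric] Q_col)
  finally show ?thesis by (simp add: Ed_def)
qed

lemma nrm_T: "nrm (T f) \<le> nrm f - Ed f / 2"
proof -
  have e: "pm i * (T f i)^2 = (pm i * (f i)^2 + 2 * (pm i * f i * P f i) + pm i * (P f i)^2) / 4" for i
    by (simp add: T_def power2_eq_square algebra_simps)
  have eq: "nrm (T f) = (nrm f + 2 * (\<Sum>i<n. pm i * f i * P f i) + nrm (P f)) / 4"
    unfolding nrm_def e by (simp add: sum.distrib sum_divide_distrib[symmetric] sum_distrib_left)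
  have lin: "\<And>a b c d e::real. a = (b + 2*c + d)/4 \<Longrightarrow> d \<le> b \<Longrightarrow> e = b - c \<Longrightarrow> a \<le> b - e/2"
    by (simp add: field_simps)
  show ?thesis by (rule lin[OF eq[unfolded cross_eq] nrm_P[of f] Ed_eq[of f]])
qed
end


lemma split_sq:
  fixes x y :: real
  shows "(max x 0 - max y 0)^2 + (max (-x) 0 - max (-y) 0)^2 \<le> (x - y)^2"
proof (cases "x \<ge> 0"; cases "y \<ge> 0")
  assume "x \<ge> 0" "y \<ge> 0" then show ?thesis by simp
next
  assume a: "x \<ge> 0" "\<not> y \<ge> 0"
  then have "0 \<le> x * (-y)" by (intro mult_nonneg_nonneg) auto
  then show ?thesis using a by (simp add: power2_eq_square algebra_simps)
next
  assume a: "\<not> x \<ge> 0" "y \<ge> 0"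
  then have "0 \<le> (-x) * y" by (intro mult_nonneg_nonneg) auto
  then show ?thesis using a by (simp add: power2_eq_square algebra_simps)
next
  assume "\<not> x \<ge> 0" "\<not> y \<ge> 0" then show ?thesis by (simp add: power2_eq_square algebra_simps)
qed

context chain begin

lemma Ed_nonneg: "Ed f \<ge> 0"
  unfolding Ed_def using Q_nonneg by (auto intro!: sum_nonneg divide_nonneg_nonneg)

lemma n_pos: "n > 0"
  using sum_pm by (cases n) auto

context
  fixes \<phi> :: real
  assumes phiH: "\<forall>S. S \<noteq> {} \<and> S \<subseteq> {..<n} \<and> (\<Sum>i\<in>S. u i * v i) \<le> 1/2 \<longrightarrow> \<phi> \<le> edge_expansion_set n R u v S"
begin

lemma cut_bound:
  assumes "S \<subseteq> {..<n}" "(\<Sum>i\<in>S. pm i) \<le> 1/2"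
  shows "\<phi> * (\<Sum>i\<in>S. pm i) \<le> (\<Sum>i\<in>S. \<Sum>j\<in>{..<n}-S. Q i j)"
proof (cases "S = {}")
  case True then show ?thesis by simp
next
  case False
  have den: "(\<Sum>i\<in>S. \<Sum>j<n. u i * R i j * v j) = (\<Sum>i\<in>S. pm i)"
    using assms(1) by (intro sum.cong refl) (use Q_row in \<open>auto simp: Q_def\<close>)
  have fin: "finite S" using assms(1) finite_subset by blast
  have pos: "(\<Sum>i\<in>S. pm i) > 0"
    using False assms(1) pm_pos fin by (intro sum_pos) auto
  have "\<phi> \<le> edge_expansion_set n R u v S"
    using phiH False assms by (auto simp: pm_def)
  also have "\<dots> = (\<Sum>i\<in>S. \<Sum>j\<in>{..<n}-S. Q i j) / (\<Sum>i\<in>S. pm i)"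
    unfolding edge_expansion_set_def den by (simp add: Q_def)
  finally show ?thesis using pos by (simp add: field_simps)
qed

lemma coarea_aux:
  "\<forall>w. card {i. i < n \<and> w i > 0} = N \<longrightarrow> (\<forall>i<n. w i \<ge> 0) \<longrightarrow> (\<Sum>i | i < n \<and> w i > 0. pm i) \<le> 1/2 \<longrightarrow>
     \<phi> * (\<Sum>i<n. pm i * w i) \<le> (\<Sum>i<n. \<Sum>j<n. Q i j * max (w i - w j) 0)"
proof (induction N rule: less_induct)
  case (less N)
  show ?case
  proof (intro allI impI)
    fix w :: "nat \<Rightarrow> real"
    assume card: "card {i. i < n \<and> w i > 0} = N" and wnn: "\<forall>i<n. w i \<ge> 0"
      and half: "(\<Sum>i | i < n \<and> w i > 0. pm i) \<le> 1/2"
    define S where "S = {i. i < n \<and> w i > 0}"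
    have finS: "finite S" unfolding S_def by auto
    have Ssub: "S \<subseteq> {..<n}" unfolding S_def by auto
    have rhs_nn: "0 \<le> (\<Sum>i<n. \<Sum>j<n. Q i j * max (w i - w j) 0)"
      using Q_nonneg by (intro sum_nonneg) auto
    show "\<phi> * (\<Sum>i<n. pm i * w i) \<le> (\<Sum>i<n. \<Sum>j<n. Q i j * max (w i - w j) 0)"
    proof (cases "S = {}")
      case True
      then have "\<forall>i<n. w i = 0" using wnn unfolding S_def by force
      then show ?thesis using rhs_nn by simp
    next
      case False
      define a where "a = Min (w ` S)"
      have aS: "a \<in> w ` S" unfolding a_def using False finS by auto
      then obtain i0 where i0: "i0 \<in> S" "w i0 = a" by auto
      have apos: "a > 0" using i0 unfolding S_def by auto
      have ale: "\<And>i. i \<in> S \<Longrightarrow> a \<le> w i" unfolding a_def using finS by auto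
      define w' where "w' i = (if i \<in> S then w i - a else 0)" for i
      have w'nn: "\<forall>i<n. w' i \<ge> 0" using ale by (auto simp: w'_def)
      have S'sub: "{i. i < n \<and> w' i > 0} \<subseteq> S - {i0}"
        using i0 by (auto simp: w'_def S_def split: if_splits)
      have card': "card {i. i < n \<and> w' i > 0} < N"
      proof -
        have "card {i. i < n \<and> w' i > 0} \<le> card (S - {i0})"
          by (rule card_mono) (use finS S'sub in auto)
        also have "\<dots> < card S" by (rule card_Diff1_less[OF finS i0(1)])
        finally show ?thesis using card by (simp add: S_def)
      qed
      have half': "(\<Sum>i | i < n \<and> w' i > 0. pm i) \<le> 1/2"
      proof -
        have "(\<Sum>i | i < n \<and> w' i > 0. pm i) \<le> (\<Sum>i\<in>S. pm i)"
          using S'sub finS pm_pos Ssub by (intro sum_mono2) (auto simp: less_imp_le)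
        then show ?thesis using half by (simp add: S_def)
      qed
      have IH: "\<phi> * (\<Sum>i<n. pm i * w' i) \<le> (\<Sum>i<n. \<Sum>j<n. Q i j * max (w' i - w' j) 0)"
        using less.IH[OF card'] w'nn half' by blast
      have split: "max (w i - w j) 0 = (if i \<in> S \<and> j \<notin> S then a else 0) + max (w' i - w' j) 0"
        if "i < n" "j < n" for i j
      proof -
        have h: "w i \<ge> 0" "w j \<ge> 0" "0 < w i \<Longrightarrow> a \<le> w i" "0 < w j \<Longrightarrow> a \<le> w j"
          using that wnn ale by (auto simp: S_def)
        have "i \<in> S \<longleftrightarrow> 0 < w i" "j \<in> S \<longleftrightarrow> 0 < w j" using that by (auto simp: S_def)
        then show ?thesis unfolding w'_def using h by (smt (verit))
      qed
      have "(\<Sum>i<n. \<Sum>j<n. Q i j * max (w i - w j) 0) =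
          (\<Sum>i<n. \<Sum>j<n. Q i j * (if i \<in> S \<and> j \<notin> S then a else 0)) + (\<Sum>i<n. \<Sum>j<n. Q i j * max (w' i - w' j) 0)"
        by (simp add: split distrib_left sum.distrib)
      also have "(\<Sum>i<n. \<Sum>j<n. Q i j * (if i \<in> S \<and> j \<notin> S then a else 0)) = a * (\<Sum>i\<in>S. \<Sum>j\<in>{..<n}-S. Q i j)"
      proof -
        have "(\<Sum>i<n. \<Sum>j<n. Q i j * (if i \<in> S \<and> j \<notin> S then a else 0)) =
            (\<Sum>i<n. if i \<in> S then (\<Sum>j\<in>{..<n}-S. a * Q i j) else 0)"
        proof (intro sum.cong refl)
          fix i
          have "(\<Sum>j<n. Q i j * (if i \<in> S \<and> j \<notin> S then a else 0)) = (\<Sum>j<n. if j \<in> -S then (if i \<in> S then a * Q i j else 0) else 0)"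
            by (intro sum.cong) auto
          also have "\<dots> = (\<Sum>j\<in>{..<n} \<inter> -S. if i \<in> S then a * Q i j else 0)"
            by (simp add: sum.inter_restrict)
          finally show "(\<Sum>j<n. Q i j * (if i \<in> S \<and> j \<notin> S then a else 0)) = (if i \<in> S then (\<Sum>j\<in>{..<n}-S. a * Q i j) else 0)"
            by (simp add: Diff_eq)
        qed
        also have "\<dots> = (\<Sum>i\<in>{..<n} \<inter> S. \<Sum>j\<in>{..<n}-S. a * Q i j)"
          by (simp add: sum.inter_restrict)
        also have "{..<n} \<inter> S = S" using Ssub by auto
        finally show ?thesis by (simp add: sum_distrib_left)
      qed
      finally have rhs: "(\<Sum>i<n. \<Sum>j<n. Q i j * max (w i - w j) 0) =
          a * (\<Sum>i\<in>S. \<Sum>j\<in>{..<n}-S. Q i j) + (\<Sum>i<n. \<Sum>j<n. Q i j * max (w' i - w' j) 0)" .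
      have lhs: "(\<Sum>i<n. pm i * w i) = a * (\<Sum>i\<in>S. pm i) + (\<Sum>i<n. pm i * w' i)"
      proof -
        have "(\<Sum>i<n. pm i * w i) = (\<Sum>i<n. (if i \<in> S then a * pm i else 0) + pm i * w' i)"
          using wnn by (intro sum.cong refl) (force simp: w'_def S_def algebra_simps)
        also have "\<dots> = (\<Sum>i<n. if i \<in> S then a * pm i else 0) + (\<Sum>i<n. pm i * w' i)"
          by (simp add: sum.distrib)
        also have "(\<Sum>i<n. if i \<in> S then a * pm i else 0) = (\<Sum>i\<in>{..<n} \<inter> S. a * pm i)"
          by (simp add: sum.inter_restrict)
        also have "{..<n} \<inter> S = S" using Ssub by auto
        finally show ?thesis by (simp add: sum_distrib_left)
      qed
      have cb: "\<phi> * (\<Sum>i\<in>S. pm i) \<le> (\<Sum>i\<in>S. \<Sum>j\<in>{..<n}-S. Q i j)"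
        using cut_bound[OF Ssub] half by (simp add: S_def)
      have "a * (\<phi> * (\<Sum>i\<in>S. pm i)) \<le> a * (\<Sum>i\<in>S. \<Sum>j\<in>{..<n}-S. Q i j)"
        using cb apos by (intro mult_left_mono) auto
      then show ?thesis unfolding lhs rhs using IH by (simp add: algebra_simps)
    qed
  qed
qed

lemma coarea:
  assumes "\<forall>i<n. w i \<ge> 0" "(\<Sum>i | i < n \<and> w i > 0. pm i) \<le> 1/2"
  shows "\<phi> * (\<Sum>i<n. pm i * w i) \<le> (\<Sum>i<n. \<Sum>j<n. Q i j * max (w i - w j) 0)"
  using coarea_aux[of "card {i. i < n \<and> w i > 0}"] assms by blast

end
end


lemma CS_double:
  fixes g h :: "nat \<Rightarrow> nat \<Rightarrow> real"
  shows "(\<Sum>i<n. \<Sum>j<n. g i j * h i j)^2 \<le> (\<Sum>i<n. \<Sum>j<n. (g i j)^2) * (\<Sum>i<n. \<Sum>j<n. (h i j)^2)"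
proof -
  have e: "\<And>F. (\<Sum>i<n. \<Sum>j<n. F i j) = (\<Sum>p\<in>{..<n}\<times>{..<n}. F (fst p) (snd p))"
    by (simp add: sum.cartesian_product case_prod_beta')
  show ?thesis unfolding e by (rule Cauchy_Schwarz_ineq_sum)
qed

context chain begin

lemma sum_Q_sq_bound: "(\<Sum>i<n. \<Sum>j<n. Q i j * (f i + f j)^2) \<le> 4 * nrm f"
proof -
  have "(\<Sum>i<n. \<Sum>j<n. Q i j * (f i + f j)^2) \<le> (\<Sum>i<n. \<Sum>j<n. 2 * (Q i j * (f i)^2) + 2 * (Q i j * (f j)^2))"
  proof (intro sum_mono)
    fix i j assume "i \<in> {..<n}" "j \<in> {..<n}"
    then have q: "Q i j \<ge> 0" using Q_nonneg by auto
    have "(f i + f j)^2 \<le> 2 * (f i)^2 + 2 * (f j)^2"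
      using sum_squares_ge_zero[of "f i - f j" 0] by (simp add: power2_eq_square algebra_simps)
    from mult_left_mono[OF this q] show "Q i j * (f i + f j)^2 \<le> 2 * (Q i j * (f i)^2) + 2 * (Q i j * (f j)^2)"
      by (simp add: algebra_simps)
  qed
  also have "\<dots> = 2 * (\<Sum>i<n. \<Sum>j<n. Q i j * (f i)^2) + 2 * (\<Sum>i<n. \<Sum>j<n. Q i j * (f j)^2)"
    by (simp add: sum.distrib sum_distrib_left)
  also have "(\<Sum>i<n. \<Sum>j<n. Q i j * (f i)^2) = nrm f"
    unfolding nrm_def by (intro sum.cong) (simp_all add: sum_distrib_right[symmetric] Q_row)
  also have "(\<Sum>i<n. \<Sum>j<n. Q i j * (f j)^2) = (\<Sum>j<n. \<Sum>i<n. Q i j * (f j)^2)"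
    by (rule sum.swap)
  also have "\<dots> = nrm f"
    unfolding nrm_def by (intro sum.cong) (simp_all add: sum_distrib_right[symmetric] Q_col)
  finally show ?thesis by simp
qed

context
  fixes \<phi> :: real
  assumes phiH: "\<forall>S. S \<noteq> {} \<and> S \<subseteq> {..<n} \<and> (\<Sum>i\<in>S. u i * v i) \<le> 1/2 \<longrightarrow> \<phi> \<le> edge_expansion_set n R u v S"
    and phi_nn: "\<phi> \<ge> 0"
begin

lemma energy_pos:
  assumes fnn: "\<forall>i<n. f i \<ge> 0" and half: "(\<Sum>i | i < n \<and> f i > 0. pm i) \<le> 1/2"
  shows "\<phi>^2 / 8 * nrm f \<le> Ed f"
proof -
  have set_eq: "{i. i < n \<and> (f i)^2 > 0} = {i. i < n \<and> f i > 0}"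
    using fnn by (auto simp: less_le)
  have A: "\<phi> * nrm f \<le> (\<Sum>i<n. \<Sum>j<n. Q i j * max ((f i)^2 - (f j)^2) 0)"
    using coarea[OF phiH, of "\<lambda>i. (f i)^2"] half set_eq by (simp add: nrm_def)
  have B: "(\<Sum>i<n. \<Sum>j<n. Q i j * max ((f i)^2 - (f j)^2) 0) \<le>
      (\<Sum>i<n. \<Sum>j<n. (sqrt (Q i j) * \<bar>f i - f j\<bar>) * (sqrt (Q i j) * (f i + f j)))"
  proof (intro sum_mono)
    fix i j assume ij: "i \<in> {..<n}" "j \<in> {..<n}"
    then have q: "Q i j \<ge> 0" using Q_nonneg by auto
    have fi: "f i \<ge> 0" "f j \<ge> 0" using fnn ij by auto
    have "max ((f i)^2 - (f j)^2) 0 \<le> \<bar>f i - f j\<bar> * (f i + f j)"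
    proof -
      have "(f i)^2 - (f j)^2 = (f i - f j) * (f i + f j)" by (simp add: power2_eq_square algebra_simps)
      also have "\<dots> \<le> \<bar>f i - f j\<bar> * (f i + f j)" using fi by (intro mult_right_mono) auto
      finally show ?thesis using fi by auto
    qed
    from mult_left_mono[OF this q]
    show "Q i j * max ((f i)^2 - (f j)^2) 0 \<le> (sqrt (Q i j) * \<bar>f i - f j\<bar>) * (sqrt (Q i j) * (f i + f j))"
      using q by (simp add: algebra_simps)
  qed
  have C: "(\<Sum>i<n. \<Sum>j<n. (sqrt (Q i j) * \<bar>f i - f j\<bar>) * (sqrt (Q i j) * (f i + f j)))^2 \<le>
      (2 * Ed f) * (4 * nrm f)"
  proof -
    have "(\<Sum>i<n. \<Sum>j<n. (sqrt (Q i j) * \<bar>f i - f j\<bar>) * (sqrt (Q i j) * (f i + f j)))^2 \<le>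
      (\<Sum>i<n. \<Sum>j<n. (sqrt (Q i j) * \<bar>f i - f j\<bar>)^2) * (\<Sum>i<n. \<Sum>j<n. (sqrt (Q i j) * (f i + f j))^2)"
      by (rule CS_double)
    also have "(\<Sum>i<n. \<Sum>j<n. (sqrt (Q i j) * \<bar>f i - f j\<bar>)^2) = 2 * Ed f"
      unfolding Ed_def using Q_nonneg by (auto simp: power_mult_distrib intro!: sum.cong)
    also have "(\<Sum>i<n. \<Sum>j<n. (sqrt (Q i j) * (f i + f j))^2) = (\<Sum>i<n. \<Sum>j<n. Q i j * (f i + f j)^2)"
      using Q_nonneg by (auto simp: power_mult_distrib intro!: sum.cong)
    also have "2 * Ed f * \<dots> \<le> 2 * Ed f * (4 * nrm f)"
      using sum_Q_sq_bound[of f] Ed_nonneg[of f] by (intro mult_left_mono) auto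
    finally show ?thesis .
  qed
  have nn: "0 \<le> \<phi> * nrm f" using phi_nn nrm_nonneg by simp
  have "(\<phi> * nrm f)^2 \<le> 8 * Ed f * nrm f"
  proof -
    have "(\<phi> * nrm f)^2 \<le> (\<Sum>i<n. \<Sum>j<n. (sqrt (Q i j) * \<bar>f i - f j\<bar>) * (sqrt (Q i j) * (f i + f j)))^2"
      using A B nn by (intro power_mono) auto
    with C show ?thesis by simp
  qed
  then have "nrm f * (\<phi>^2 * nrm f) \<le> nrm f * (8 * Ed f)"
    by (simp add: power2_eq_square algebra_simps)
  then show ?thesis
  proof (cases "nrm f = 0")
    case True then show ?thesis using Ed_nonneg by simp
  next
    case False
    then have "nrm f > 0" using nrm_nonneg[of f] by simp
    with \<open>nrm f * (\<phi>^2 * nrm f) \<le> nrm f * (8 * Ed f)\<close> have "\<phi>^2 * nrm f \<le> 8 * Ed f"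
      by (simp add: mult_le_cancel_left)
    then show ?thesis by simp
  qed
qed

lemma cheeger:
  assumes mean0: "mean g = 0"
  shows "\<phi>^2 / 8 * nrm g \<le> Ed g"
proof -
  define Vals where "Vals = g ` {..<n}"
  define Cand where "Cand = {a \<in> Vals. (\<Sum>i | i < n \<and> g i > a. pm i) \<le> 1/2}"
  have finV: "finite Vals" "Vals \<noteq> {}" using n_pos by (auto simp: Vals_def)
  have "Max Vals \<in> Cand"
  proof -
    have e: "{i. i < n \<and> g i > Max Vals} = {}" using finV by (auto simp: Vals_def)
    have "Max Vals \<in> Vals" using finV by simp
    then show ?thesis unfolding Cand_def mem_Collect_eq e by simp
  qed
  then have candne: "Cand \<noteq> {}" by blast
  have finC: "finite Cand" using finV(1) by (rule rev_finite_subset) (auto simp: Cand_def)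
  define m where "m = Min Cand"
  have mC: "m \<in> Cand" using candne finC by (simp add: m_def)
  have hm1: "(\<Sum>i | i < n \<and> g i > m. pm i) \<le> 1/2" using mC by (simp add: Cand_def)
  have hm2: "(\<Sum>i | i < n \<and> g i < m. pm i) \<le> 1/2"
  proof (cases "{i. i < n \<and> g i < m} = {}")
    case True then show ?thesis unfolding True by simp
  next
    case False
    define B where "B = {i. i < n \<and> g i < m}"
    have finB: "finite B" by (simp add: B_def)
    define b where "b = Max (g ` B)"
    have bB: "b \<in> g ` B" using False finB by (simp add: b_def B_def)
    have bmax: "\<And>i. i \<in> B \<Longrightarrow> g i \<le> b" using finB by (simp add: b_def)
    have bm: "b < m" using bB by (auto simp: B_def)
    have bV: "b \<in> Vals" using bB by (auto simp: B_def Vals_def)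
    have "b \<notin> Cand"
    proof
      assume "b \<in> Cand"
      then have "m \<le> b" using finC by (simp add: m_def)
      with bm show False by simp
    qed
    then have big: "(\<Sum>i | i < n \<and> g i > b. pm i) > 1/2" using bV by (simp add: Cand_def)
    have "B = {..<n} - {i. i < n \<and> g i > b}"
      using bmax bm by (force simp: B_def)
    moreover have "(\<Sum>i\<in>{..<n} - {i. i < n \<and> g i > b}. pm i) = (\<Sum>i<n. pm i) - (\<Sum>i | i < n \<and> g i > b. pm i)"
      by (rule sum_diff) auto
    ultimately have "(\<Sum>i\<in>B. pm i) = (\<Sum>i<n. pm i) - (\<Sum>i | i < n \<and> g i > b. pm i)"
      by simp
    then show ?thesis using big sum_pm by (simp add: B_def)
  qed
  define gp where "gp i = max (g i - m) 0" for i
  define gn where "gn i = max (- (g i - m)) 0" for i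
  have Ed_split: "Ed gp + Ed gn \<le> Ed g"
  proof -
    have "Ed gp + Ed gn = (\<Sum>i<n. \<Sum>j<n. Q i j * ((gp i - gp j)^2 + (gn i - gn j)^2)) / 2"
      unfolding Ed_def add_divide_distrib[symmetric] sum.distrib[symmetric] distrib_left ..
    also have "\<dots> \<le> (\<Sum>i<n. \<Sum>j<n. Q i j * (g i - g j)^2) / 2"
    proof (intro divide_right_mono sum_mono mult_left_mono)
      fix i j assume "i \<in> {..<n}" "j \<in> {..<n}"
      then show "Q i j \<ge> 0" using Q_nonneg by auto
      show "(gp i - gp j)^2 + (gn i - gn j)^2 \<le> (g i - g j)^2"
        using split_sq[of "g i - m" "g j - m"] by (simp add: gp_def gn_def)
    qed auto
    finally show ?thesis by (simp add: Ed_def)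
  qed
  have nrm_split: "nrm g \<le> nrm gp + nrm gn"
  proof -
    have "nrm gp + nrm gn = (\<Sum>i<n. pm i * (g i - m)^2)"
      unfolding nrm_def sum.distrib[symmetric]
      by (intro sum.cong refl) (simp add: gp_def gn_def max_def power2_eq_square algebra_simps)
    also have "\<dots> = (\<Sum>i<n. pm i * (g i)^2 - (2 * m) * (pm i * g i) + m^2 * pm i)"
      by (intro sum.cong refl) (simp add: power2_eq_square algebra_simps)
    also have "\<dots> = nrm g - (2 * m) * mean g + m^2 * (\<Sum>i<n. pm i)"
      unfolding sum.distrib sum_subtractf nrm_def mean_def sum_distrib_left ..
    finally show ?thesis using mean0 sum_pm by simp
  qed
  have Ep: "\<phi>^2 / 8 * nrm gp \<le> Ed gp"
  proof (rule energy_pos)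
    show "\<forall>i<n. gp i \<ge> 0" by (simp add: gp_def)
    have "{i. i < n \<and> gp i > 0} = {i. i < n \<and> g i > m}" by (auto simp: gp_def)
    then show "(\<Sum>i | i < n \<and> gp i > 0. pm i) \<le> 1/2" using hm1 by simp
  qed
  have En: "\<phi>^2 / 8 * nrm gn \<le> Ed gn"
  proof (rule energy_pos)
    show "\<forall>i<n. gn i \<ge> 0" by (simp add: gn_def)
    have "{i. i < n \<and> gn i > 0} = {i. i < n \<and> g i < m}" by (auto simp: gn_def)
    then show "(\<Sum>i | i < n \<and> gn i > 0. pm i) \<le> 1/2" using hm2 by simp
  qed
  have "\<phi>^2 / 8 * nrm g \<le> \<phi>^2 / 8 * (nrm gp + nrm gn)"
    using nrm_split by (intro mult_left_mono) auto
  also have "\<dots> \<le> Ed g" using Ep En Ed_split by (simp add: distrib_left)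
  finally show ?thesis .
qed

lemma contraction:
  assumes "mean g = 0"
  shows "nrm (T g) \<le> (1 - \<phi>^2/16) * nrm g"
  using nrm_T[of g] cheeger[OF assms] by (simp add: algebra_simps)

end
end


lemma mv_cong: "(\<And>j. j < n \<Longrightarrow> x j = y j) \<Longrightarrow> mv n B x i = mv n B y i"
  by (simp add: mv_def)

lemma mv_pow: "i < n \<Longrightarrow> mv n (mat_pow n B k) x i = ((mv n B)^^k) x i"
proof (induction k arbitrary: x i)
  case 0
  have "(\<Sum>j<n. id_mat i j * x j) = (\<Sum>j<n. if i = j then x j else 0)"
    by (intro sum.cong) (auto simp: id_mat_def)
  then show ?case using 0 by (simp add: mv_def)
next
  case (Suc k)
  have "mv n (mat_pow n B (Suc k)) x i = mv n (mat_pow n B k) (mv n B x) i"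
  proof -
    have "mv n (mat_pow n B (Suc k)) x i = (\<Sum>j<n. \<Sum>l<n. mat_pow n B k i l * B l j * x j)"
      by (simp add: mv_def mat_mult_def sum_distrib_right)
    also have "\<dots> = (\<Sum>l<n. \<Sum>j<n. mat_pow n B k i l * B l j * x j)" by (rule sum.swap)
    also have "\<dots> = mv n (mat_pow n B k) (mv n B x) i"
      by (simp add: mv_def sum_distrib_left mult.assoc)
    finally show ?thesis .
  qed
  also have "\<dots> = ((mv n B)^^k) (mv n B x) i" using Suc by simp
  finally show ?case by (simp add: funpow_Suc_right del: funpow.simps)
qed

lemma iter_rel:
  assumes rel: "\<And>h i. i < n \<Longrightarrow> mv n B (\<lambda>j. v j * h j) i = v i * F h i"
    and cong: "\<And>f g i. (\<And>j. j < n \<Longrightarrow> f j = g j) \<Longrightarrow> i < n \<Longrightarrow> F f i = F g i"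
  shows "i < n \<Longrightarrow> ((mv n B)^^k) (\<lambda>j. v j * h j) i = v i * (F^^k) h i"
proof (induction k arbitrary: i)
  case 0 then show ?case by simp
next
  case (Suc k)
  have "((mv n B)^^Suc k) (\<lambda>j. v j * h j) i = mv n B (((mv n B)^^k) (\<lambda>j. v j * h j)) i" by simp
  also have "\<dots> = mv n B (\<lambda>j. v j * (F^^k) h j) i" by (rule mv_cong) (use Suc.IH in auto)
  also have "\<dots> = v i * F ((F^^k) h) i" by (rule rel[OF Suc.prems])
  finally show ?case by simp
qed

lemma exp_expand:
  shows "(\<Sum>j<n. mat_exp n (\<lambda>a b. s * (B a b - id_mat a b)) i j * x j) =
           exp (-s) * (\<Sum>m. s^m / fact m * mv n (mat_pow n B m) x i)"
    and "summable (\<lambda>m. s^m / fact m * mv n (mat_pow n B m) x i)"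
proof -
  have sj: "summable (\<lambda>m. s^m / fact m * mat_pow n B m i j * x j)" if "j \<in> {..<n}" for j
    using summable_mult2[OF summable_rabs_cancel[OF exp_series_summable], of j n s B i "x j"] that by simp
  have e: "(\<lambda>m. s^m / fact m * mv n (mat_pow n B m) x i) = (\<lambda>m. \<Sum>j<n. s^m / fact m * mat_pow n B m i j * x j)"
    by (simp add: mv_def sum_distrib_left mult.assoc)
  show "summable (\<lambda>m. s^m / fact m * mv n (mat_pow n B m) x i)"
    unfolding e by (rule summable_sum) (rule sj)
  have "(\<Sum>j<n. mat_exp n (\<lambda>a b. s * (B a b - id_mat a b)) i j * x j) =
        (\<Sum>j<n. exp (-s) * (\<Sum>m. s^m / fact m * mat_pow n B m i j * x j))"
  proof (intro sum.cong refl)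
    fix j assume j: "j \<in> {..<n}"
    have "(\<Sum>m. s^m / fact m * mat_pow n B m i j) * x j = (\<Sum>m. s^m / fact m * mat_pow n B m i j * x j)"
      by (rule suminf_mult2) (rule summable_rabs_cancel[OF exp_series_summable], use j in simp)
    then show "mat_exp n (\<lambda>a b. s * (B a b - id_mat a b)) i j * x j = exp (-s) * (\<Sum>m. s^m / fact m * mat_pow n B m i j * x j)"
      using mat_exp_shift[of j n s B i] j by simp
  qed
  also have "\<dots> = exp (-s) * (\<Sum>j<n. \<Sum>m. s^m / fact m * mat_pow n B m i j * x j)"
    by (simp add: sum_distrib_left)
  also have "(\<Sum>j<n. \<Sum>m. s^m / fact m * mat_pow n B m i j * x j) = (\<Sum>m. \<Sum>j<n. s^m / fact m * mat_pow n B m i j * x j)"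
    by (rule suminf_sum[symmetric]) (rule sj)
  finally show "(\<Sum>j<n. mat_exp n (\<lambda>a b. s * (B a b - id_mat a b)) i j * x j) =
           exp (-s) * (\<Sum>m. s^m / fact m * mv n (mat_pow n B m) x i)"
    unfolding e .
qed



lemma exp_sums_real: "(\<lambda>m. s^m / fact m) sums exp (s::real)"
  using exp_converges[of s] by (simp add: divide_inverse mult.commute)

context chain begin

definition "Lm a b = (id_mat a b + R a b) / 2"

lemma P_rel: "i < n \<Longrightarrow> mv n R (\<lambda>j. v j * h j) i = v i * P h i"
proof -
  assume "i < n"
  then have "v i > 0" using v_pos by auto
  then show ?thesis by (simp add: mv_def P_def mult.assoc)
qed

lemma T_rel: "i < n \<Longrightarrow> mv n Lm (\<lambda>j. v j * h j) i = v i * T h i"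
proof -
  assume i: "i < n"
  have "mv n Lm (\<lambda>j. v j * h j) i = ((\<Sum>j<n. id_mat i j * (v j * h j)) + mv n R (\<lambda>j. v j * h j) i) / 2"
    by (simp add: mv_def Lm_def sum.distrib sum_divide_distrib[symmetric] algebra_simps)
  also have "(\<Sum>j<n. id_mat i j * (v j * h j)) = (\<Sum>j<n. if i = j then v j * h j else 0)"
    by (intro sum.cong) (auto simp: id_mat_def)
  also have "\<dots> = v i * h i" using i by simp
  finally show ?thesis using P_rel[OF i] by (simp add: T_def algebra_simps)
qed

lemma T_pow_const: "i < n \<Longrightarrow> (T^^m) (\<lambda>j. g j + c) i = (T^^m) g i + c"
proof (induction m arbitrary: i)
  case 0 then show ?case by simp
next
  case (Suc m)
  have "(T^^Suc m) (\<lambda>j. g j + c) i = T (\<lambda>j. (T^^m) g j + c) i"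
    using Suc by (simp, intro T_cong) auto
  also have "\<dots> = T ((T^^m) g) i + c" by (rule T_const[OF Suc.prems])
  finally show ?case by simp
qed

lemma T_pow_bound: "(\<And>j. j < n \<Longrightarrow> \<bar>g j\<bar> \<le> M) \<Longrightarrow> i < n \<Longrightarrow> \<bar>(T^^m) g i\<bar> \<le> M"
proof (induction m arbitrary: i)
  case 0 then show ?case by simp
next
  case (Suc m)
  have "- M \<le> T ((T^^m) g) i \<and> T ((T^^m) g) i \<le> M"
  proof (rule T_bounds)
    fix j assume "j < n"
    then have "\<bar>(T^^m) g j\<bar> \<le> M" using Suc by blast
    then show "- M \<le> (T^^m) g j \<and> (T^^m) g j \<le> M" by (simp add: abs_le_iff)
  qed (use Suc in auto)
  then show ?case by (simp add: abs_le_iff)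
qed

lemma mean_T_pow: "mean ((T^^m) g) = mean g"
  by (induction m) (simp_all add: mean_T)

lemma nrm_T_pow:
  assumes contr: "\<And>f. mean f = 0 \<Longrightarrow> nrm (T f) \<le> \<rho> * nrm f" and rho: "0 \<le> \<rho>" and mg: "mean g = 0"
  shows "nrm ((T^^m) g) \<le> \<rho>^m * nrm g"
proof (induction m)
  case 0 then show ?case by simp
next
  case (Suc m)
  have "nrm ((T^^Suc m) g) \<le> \<rho> * nrm ((T^^m) g)"
    using contr[of "(T^^m) g"] mean_T_pow[of m g] mg by simp
  also have "\<dots> \<le> \<rho> * (\<rho>^m * nrm g)" using Suc rho by (intro mult_left_mono) auto
  finally show ?case by simp
qed

lemma l1_l2: "(\<Sum>i<n. pm i * \<bar>f i\<bar>) \<le> sqrt (nrm f)"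
proof -
  have "(\<Sum>i<n. sqrt (pm i) * (sqrt (pm i) * \<bar>f i\<bar>))^2 \<le> (\<Sum>i<n. (sqrt (pm i))^2) * (\<Sum>i<n. (sqrt (pm i) * \<bar>f i\<bar>)^2)"
    by (rule Cauchy_Schwarz_ineq_sum)
  moreover have "(\<Sum>i<n. sqrt (pm i) * (sqrt (pm i) * \<bar>f i\<bar>)) = (\<Sum>i<n. pm i * \<bar>f i\<bar>)"
    using pm_pos by (intro sum.cong) (auto simp: mult.assoc[symmetric] less_imp_le)
  moreover have "(\<Sum>i<n. (sqrt (pm i))^2) = 1" using pm_pos sum_pm by (simp add: less_imp_le)
  moreover have "(\<Sum>i<n. (sqrt (pm i) * \<bar>f i\<bar>)^2) = nrm f"
    unfolding nrm_def using pm_pos by (intro sum.cong) (auto simp: power_mult_distrib less_imp_le)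
  ultimately have "(\<Sum>i<n. pm i * \<bar>f i\<bar>)^2 \<le> nrm f" by simp
  then show ?thesis by (simp add: real_le_rsqrt)
qed

end


context chain begin

lemma ub_err:
  assumes contr: "\<And>f. mean f = 0 \<Longrightarrow> nrm (T f) \<le> \<rho> * nrm f" and rho0: "0 \<le> \<rho>" and rho1: "\<rho> \<le> 1"
    and t: "t \<ge> 0"
  shows "(\<Sum>i<n. \<bar>u i * (\<Sum>j<n. (mat_exp n (\<lambda>a b. t * (R a b - id_mat a b)) i j - v i * u j) * x j)\<bar>)
        \<le> exp (- (2 * t) * (1 - sqrt \<rho>)) * sqrt (nrm (\<lambda>j. x j / v j - mean (\<lambda>j. x j / v j)))"
proof -
  define s where "s = 2 * t"
  have s0: "s \<ge> 0" using t by (simp add: s_def)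
  define h where "h = (\<lambda>j. x j / v j)"
  define c where "c = mean h"
  define g where "g j = h j - c" for j
  have gdef: "(\<lambda>j. x j / v j - mean (\<lambda>j. x j / v j)) = g" by (intro ext) (simp add: g_def h_def c_def)
  have hg: "h = (\<lambda>j. g j + c)" by (intro ext) (simp add: g_def)
  have mg: "mean g = 0"
  proof -
    have "mean g = (\<Sum>i<n. pm i * h i - c * pm i)"
      unfolding mean_def g_def by (intro sum.cong refl) (simp add: algebra_simps)
    also have "\<dots> = mean h - c * (\<Sum>i<n. pm i)"
      unfolding sum_subtractf mean_def sum_distrib_left ..
    finally show ?thesis using sum_pm by (simp add: c_def)
  qed
  have Eeq: "(\<lambda>a b. t * (R a b - id_mat a b)) = (\<lambda>a b. s * (Lm a b - id_mat a b))"
    by (intro ext) (simp add: Lm_def s_def algebra_simps)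
  define M where "M = (\<Sum>j<n. \<bar>g j\<bar>)"
  have gM: "\<And>j. j < n \<Longrightarrow> \<bar>g j\<bar> \<le> M"
    unfolding M_def by (rule member_le_sum) auto
  define a where "a m i = s^m / fact m * (T^^m) g i" for m i
  have expS: "summable (\<lambda>m. s^m / fact m * C)" for C
    using summable_mult2[OF sums_summable[OF exp_sums_real]] by blast
  have sa: "summable (\<lambda>m. \<bar>a m i\<bar>)" if i: "i < n" for i
  proof (rule summable_comparison_test'[OF expS[of M], where N=0])
    fix m :: nat
    have "\<bar>(T^^m) g i\<bar> \<le> M" by (rule T_pow_bound[OF gM i])
    then show "norm \<bar>a m i\<bar> \<le> s^m / fact m * M"
      using s0 by (simp add: a_def abs_mult mult_left_mono divide_right_mono)
  qed
  have inner: "(\<Sum>j<n. (mat_exp n (\<lambda>a b. t * (R a b - id_mat a b)) i j - v i * u j) * x j) = v i * exp (-s) * (\<Sum>m. a m i)"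
    if i: "i < n" for i
  proof -
    have x_eq: "\<And>j. j < n \<Longrightarrow> x j = v j * h j" using v_pos by (auto simp: h_def)
    have cx: "(\<Sum>j<n. u j * x j) = c"
      unfolding c_def mean_def pm_def h_def using v_pos by (intro sum.cong) auto
    have split: "(\<Sum>j<n. (mat_exp n (\<lambda>a b. t * (R a b - id_mat a b)) i j - v i * u j) * x j)
        = (\<Sum>j<n. mat_exp n (\<lambda>a b. s * (Lm a b - id_mat a b)) i j * x j) - v i * (\<Sum>j<n. u j * x j)"
      unfolding Eeq by (simp add: left_diff_distrib sum_subtractf sum_distrib_left mult.assoc)
    have mvv: "mv n (mat_pow n Lm m) x i = v i * ((T^^m) g i + c)" for m
    proof -
      have "mv n (mat_pow n Lm m) x i = mv n (mat_pow n Lm m) (\<lambda>j. v j * h j) i"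
        by (rule mv_cong) (rule x_eq)
      also have "\<dots> = ((mv n Lm)^^m) (\<lambda>j. v j * h j) i" by (rule mv_pow[OF i])
      also have "\<dots> = v i * (T^^m) h i" by (rule iter_rel[OF T_rel T_cong i])
      also have "(T^^m) h i = (T^^m) g i + c" unfolding hg by (rule T_pow_const[OF i])
      finally show ?thesis .
    qed
    have sums1: "(\<lambda>m. s^m / fact m * mv n (mat_pow n Lm m) x i) sums (v i * (\<Sum>m. a m i) + v i * c * exp s)"
    proof -
      have "(\<lambda>m. v i * a m i + v i * c * (s^m / fact m)) sums (v i * (\<Sum>m. a m i) + v i * c * exp s)"
        by (intro sums_add sums_mult summable_sums summable_rabs_cancel[OF sa[OF i]] exp_sums_real)
      moreover have "(\<lambda>m. s^m / fact m * mv n (mat_pow n Lm m) x i) = (\<lambda>m. v i * a m i + v i * c * (s^m / fact m))"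
        unfolding mvv a_def by (intro ext) (simp add: algebra_simps)
      ultimately show ?thesis by simp
    qed
    have "(\<Sum>j<n. mat_exp n (\<lambda>a b. s * (Lm a b - id_mat a b)) i j * x j) = exp (-s) * (v i * (\<Sum>m. a m i) + v i * c * exp s)"
      unfolding exp_expand(1) using sums1 by (simp add: sums_iff)
    then show ?thesis unfolding split cx
      by (simp add: algebra_simps mult_exp_exp)
  qed
  have "(\<Sum>i<n. \<bar>u i * (\<Sum>j<n. (mat_exp n (\<lambda>a b. t * (R a b - id_mat a b)) i j - v i * u j) * x j)\<bar>)
      = (\<Sum>i<n. exp (-s) * (pm i * \<bar>\<Sum>m. a m i\<bar>))"
  proof (intro sum.cong refl)
    fix i assume "i \<in> {..<n}"
    then have i: "i < n" by simp
    have "u i > 0" "v i > 0" using u_pos v_pos i by auto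
    then show "\<bar>u i * (\<Sum>j<n. (mat_exp n (\<lambda>a b. t * (R a b - id_mat a b)) i j - v i * u j) * x j)\<bar> = exp (-s) * (pm i * \<bar>\<Sum>m. a m i\<bar>)"
      by (simp add: inner[OF i] pm_def abs_mult)
  qed
  also have "\<dots> \<le> (\<Sum>i<n. exp (-s) * (\<Sum>m. pm i * \<bar>a m i\<bar>))"
  proof (intro sum_mono mult_left_mono)
    fix i assume "i \<in> {..<n}"
    then have i: "i < n" by simp
    have "pm i * \<bar>\<Sum>m. a m i\<bar> \<le> pm i * (\<Sum>m. \<bar>a m i\<bar>)"
      using summable_rabs[OF sa[OF i]] pm_pos[OF i] by (intro mult_left_mono) auto
    also have "\<dots> = (\<Sum>m. pm i * \<bar>a m i\<bar>)" by (rule suminf_mult[symmetric, OF sa[OF i]])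
    finally show "pm i * \<bar>\<Sum>m. a m i\<bar> \<le> (\<Sum>m. pm i * \<bar>a m i\<bar>)" .
  qed auto
  also have "\<dots> = exp (-s) * (\<Sum>m. \<Sum>i<n. pm i * \<bar>a m i\<bar>)"
  proof -
    have "(\<Sum>i<n. \<Sum>m. pm i * \<bar>a m i\<bar>) = (\<Sum>m. \<Sum>i<n. pm i * \<bar>a m i\<bar>)"
      by (rule suminf_sum[symmetric]) (intro summable_mult sa, simp)
    then show ?thesis by (simp add: sum_distrib_left[symmetric])
  qed
  also have "(\<Sum>m. \<Sum>i<n. pm i * \<bar>a m i\<bar>) \<le> (\<Sum>m. (s * sqrt \<rho>)^m / fact m * sqrt (nrm g))"
  proof (rule suminf_le)
    show "summable (\<lambda>m. \<Sum>i<n. pm i * \<bar>a m i\<bar>)"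
      by (intro summable_sum summable_mult sa) simp
    show "summable (\<lambda>m. (s * sqrt \<rho>)^m / fact m * sqrt (nrm g))"
      using summable_mult2[OF sums_summable[OF exp_sums_real[of "s * sqrt \<rho>"]]] by blast
    fix m
    have "(\<Sum>i<n. pm i * \<bar>a m i\<bar>) = s^m / fact m * (\<Sum>i<n. pm i * \<bar>(T^^m) g i\<bar>)"
      using s0 by (simp add: a_def abs_mult sum_distrib_left algebra_simps)
    also have "\<dots> \<le> s^m / fact m * sqrt (nrm ((T^^m) g))"
      using s0 by (intro mult_left_mono l1_l2) auto
    also have "\<dots> \<le> s^m / fact m * sqrt (\<rho>^m * nrm g)"
      using s0 nrm_T_pow[OF contr rho0 mg] by (intro mult_left_mono) auto
    also have "\<dots> = (s * sqrt \<rho>)^m / fact m * sqrt (nrm g)"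
      using rho0 by (simp add: real_sqrt_mult real_sqrt_power power_mult_distrib)
    finally show "(\<Sum>i<n. pm i * \<bar>a m i\<bar>) \<le> (s * sqrt \<rho>)^m / fact m * sqrt (nrm g)" .
  qed
  also have "(\<Sum>m. (s * sqrt \<rho>)^m / fact m * sqrt (nrm g)) = exp (s * sqrt \<rho>) * sqrt (nrm g)"
    using sums_mult2[OF exp_sums_real[of "s * sqrt \<rho>"], of "sqrt (nrm g)"] by (simp add: sums_iff)
  finally have "(\<Sum>i<n. \<bar>u i * (\<Sum>j<n. (mat_exp n (\<lambda>a b. t * (R a b - id_mat a b)) i j - v i * u j) * x j)\<bar>)
      \<le> exp (-s) * (exp (s * sqrt \<rho>) * sqrt (nrm g))" by simp
  also have "\<dots> = exp (- (2 * t) * (1 - sqrt \<rho>)) * sqrt (nrm g)"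
    by (simp add: s_def mult_exp_exp algebra_simps)
  finally show ?thesis unfolding gdef .
qed

end


lemma sums_m_exp: "(\<lambda>m. t^m / fact m * real m) sums (t * exp (t::real))"
proof -
  have "(\<lambda>m. t * (t^m / fact m)) sums (t * exp t)" by (rule sums_mult[OF exp_sums_real])
  moreover have "(\<lambda>m. t^(Suc m) / fact (Suc m) * real (Suc m)) = (\<lambda>m. t * (t^m / fact m))"
  proof (intro ext)
    fix m
    have f: "(fact (Suc m) :: real) = real (Suc m) * fact m" by simp
    have p: "real (Suc m) > 0" "(fact m :: real) > 0" by auto
    show "t^(Suc m) / fact (Suc m) * real (Suc m) = t * (t^m / fact m)"
    proof -
      have g: "\<And>a b c::real. c \<noteq> 0 \<Longrightarrow> b \<noteq> 0 \<Longrightarrow> a / (c * b) * c = a / b" by (simp add: field_simps)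
      have "t^(Suc m) / (real (Suc m) * fact m) * real (Suc m) = t^(Suc m) / fact m"
        by (rule g) (use p in auto)
      then show ?thesis unfolding f by simp
    qed
  qed
  ultimately have "(\<lambda>m. t^(Suc m) / fact (Suc m) * real (Suc m)) sums (t * exp t)" by simp
  then show ?thesis by (subst (asm) sums_Suc_iff) simp
qed

context chain begin

lemma P_pow_bounds: "(\<And>j. j < n \<Longrightarrow> a \<le> f j \<and> f j \<le> b) \<Longrightarrow> i < n \<Longrightarrow> a \<le> (P^^m) f i \<and> (P^^m) f i \<le> b"
proof (induction m arbitrary: i)
  case 0 then show ?case by simp
next
  case (Suc m)
  show ?case by simp (rule P_bounds, use Suc in auto)
qed

lemma mean_P_pow: "mean ((P^^m) g) = mean g"
  by (induction m) (simp_all add: mean_P)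

lemma circulation:
  assumes "S \<subseteq> {..<n}"
  shows "(\<Sum>i\<in>S. \<Sum>j\<in>{..<n}-S. Q i j) = (\<Sum>i\<in>{..<n}-S. \<Sum>j\<in>S. Q i j)"
proof -
  have fin: "finite S" using assms finite_subset by blast
  have "(\<Sum>i\<in>S. \<Sum>j\<in>{..<n}-S. Q i j) + (\<Sum>i\<in>S. \<Sum>j\<in>S. Q i j) = (\<Sum>i\<in>S. \<Sum>j<n. Q i j)"
    using assms by (simp add: sum.distrib[symmetric] sum.subset_diff[of S "{..<n}"])
  also have "\<dots> = (\<Sum>i\<in>S. pm i)" using assms by (intro sum.cong) (auto simp: Q_row)
  also have "\<dots> = (\<Sum>j\<in>S. \<Sum>i<n. Q i j)" using assms by (intro sum.cong) (auto simp: Q_col)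
  also have "\<dots> = (\<Sum>j\<in>S. \<Sum>i\<in>{..<n}-S. Q i j) + (\<Sum>j\<in>S. \<Sum>i\<in>S. Q i j)"
    using assms by (simp add: sum.distrib[symmetric] sum.subset_diff[of S "{..<n}"])
  also have "(\<Sum>j\<in>S. \<Sum>i\<in>{..<n}-S. Q i j) = (\<Sum>i\<in>{..<n}-S. \<Sum>j\<in>S. Q i j)" by (rule sum.swap)
  also have "(\<Sum>j\<in>S. \<Sum>i\<in>S. Q i j) = (\<Sum>i\<in>S. \<Sum>j\<in>S. Q i j)" by (rule sum.swap)
  finally show ?thesis by simp
qed

lemma out_step:
  assumes S: "S \<subseteq> {..<n}" and sS: "sS > 0" and fb: "\<And>j. j < n \<Longrightarrow> 0 \<le> f j \<and> f j \<le> 1 / sS"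
  shows "(\<Sum>i\<in>{..<n}-S. pm i * P f i) \<le> (\<Sum>i\<in>{..<n}-S. pm i * f i) + (\<Sum>i\<in>S. \<Sum>j\<in>{..<n}-S. Q i j) / sS"
proof -
  have "(\<Sum>i\<in>{..<n}-S. pm i * P f i) = (\<Sum>i\<in>{..<n}-S. \<Sum>j<n. Q i j * f j)"
  proof (intro sum.cong refl)
    fix i assume "i \<in> {..<n} - S"
    then have "v i > 0" using v_pos by auto
    then have "pm i * P f i = u i * (\<Sum>j<n. R i j * v j * f j)" by (simp add: pm_def P_def)
    then show "pm i * P f i = (\<Sum>j<n. Q i j * f j)"
      by (simp add: Q_def sum_distrib_left mult.assoc)
  qed
  also have "\<dots> = (\<Sum>i\<in>{..<n}-S. \<Sum>j\<in>{..<n}-S. Q i j * f j) + (\<Sum>i\<in>{..<n}-S. \<Sum>j\<in>S. Q i j * f j)"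
    using S by (simp add: sum.distrib[symmetric] sum.subset_diff[of S "{..<n}"])
  also have "(\<Sum>i\<in>{..<n}-S. \<Sum>j\<in>{..<n}-S. Q i j * f j) \<le> (\<Sum>i\<in>{..<n}-S. pm i * f i)"
  proof -
    have "(\<Sum>i\<in>{..<n}-S. \<Sum>j\<in>{..<n}-S. Q i j * f j) = (\<Sum>j\<in>{..<n}-S. (\<Sum>i\<in>{..<n}-S. Q i j) * f j)"
      by (subst sum.swap) (simp add: sum_distrib_right)
    also have "\<dots> \<le> (\<Sum>j\<in>{..<n}-S. (\<Sum>i<n. Q i j) * f j)"
    proof (intro sum_mono mult_right_mono)
      fix j assume j: "j \<in> {..<n} - S"
      show "0 \<le> f j" using fb j by auto
      show "(\<Sum>i\<in>{..<n}-S. Q i j) \<le> (\<Sum>i<n. Q i j)"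
        by (rule sum_mono2) (use Q_nonneg j in auto)
    qed
    also have "\<dots> = (\<Sum>j\<in>{..<n}-S. pm j * f j)" by (intro sum.cong) (auto simp: Q_col)
    finally show ?thesis .
  qed
  also have "(\<Sum>i\<in>{..<n}-S. \<Sum>j\<in>S. Q i j * f j) \<le> (\<Sum>i\<in>{..<n}-S. \<Sum>j\<in>S. Q i j * (1 / sS))"
    using fb S Q_nonneg by (intro sum_mono mult_left_mono) auto
  also have "\<dots> = (\<Sum>i\<in>S. \<Sum>j\<in>{..<n}-S. Q i j) / sS"
    unfolding circulation[OF S] by (simp add: sum_divide_distrib)
  finally show ?thesis by simp
qed

lemma out_bound:
  assumes S: "S \<subseteq> {..<n}" and sS: "sS > 0" and hb: "\<And>j. j < n \<Longrightarrow> 0 \<le> h j \<and> h j \<le> 1 / sS"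
    and h0: "\<And>j. j \<in> {..<n} - S \<Longrightarrow> h j = 0"
  defines "K \<equiv> (\<Sum>i\<in>S. \<Sum>j\<in>{..<n}-S. Q i j) / sS"
  shows "(\<Sum>i\<in>{..<n}-S. pm i * (P^^m) h i) \<le> real m * K"
proof (induction m)
  case 0 then show ?case using h0 by simp
next
  case (Suc m)
  have "(\<Sum>i\<in>{..<n}-S. pm i * (P^^Suc m) h i) = (\<Sum>i\<in>{..<n}-S. pm i * P ((P^^m) h) i)" by simp
  also have "\<dots> \<le> (\<Sum>i\<in>{..<n}-S. pm i * (P^^m) h i) + K"
    unfolding K_def by (rule out_step[OF S sS P_pow_bounds[OF hb]])
  also have "\<dots> \<le> real m * K + K" using Suc by simp
  also have "\<dots> = real (Suc m) * K" by (simp add: algebra_simps)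
  finally show ?case .
qed

end


context chain begin

lemma P_cong': "(\<And>j. j < n \<Longrightarrow> f j = g j) \<Longrightarrow> i < n \<Longrightarrow> P f i = P g i"
  by (rule P_cong)

lemma lb_err:
  assumes S: "S \<noteq> {}" "S \<subseteq> {..<n}" "(\<Sum>i\<in>S. u i * v i) \<le> 1/2" and t: "t \<ge> 0"
  defines "x \<equiv> \<lambda>j. if j \<in> S then v j / (\<Sum>i\<in>S. u i * v i) else 0"
  shows "(\<Sum>i<n. \<bar>u i * x i\<bar>) = 1"
    and "1 - 2 * t * edge_expansion_set n R u v S \<le>
         (\<Sum>i<n. \<bar>u i * (\<Sum>j<n. (mat_exp n (\<lambda>a b. t * (R a b - id_mat a b)) i j - v i * u j) * x j)\<bar>)"
proof -
  define sS where "sS = (\<Sum>i\<in>S. pm i)"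
  have finS: "finite S" using S(2) finite_subset by blast
  have sS_pos: "sS > 0" unfolding sS_def using S pm_pos finS by (intro sum_pos) auto
  have sS_half: "sS \<le> 1/2" using S(3) by (simp add: sS_def pm_def)
  define h where "h = (\<lambda>j. if j \<in> S then 1 / sS else (0::real))"
  have xh: "x = (\<lambda>j. v j * h j)" by (intro ext) (simp add: x_def h_def sS_def pm_def)
  have SI: "{..<n} \<inter> S = S" using S(2) by auto
  have sumS: "(\<Sum>i<n. pm i * h i) = 1"
  proof -
    have "(\<Sum>i<n. pm i * h i) = (\<Sum>i<n. if i \<in> S then pm i / sS else 0)"
      by (intro sum.cong) (auto simp: h_def)
    also have "\<dots> = (\<Sum>i\<in>S. pm i / sS)" by (simp add: sum.inter_restrict[symmetric] SI)
    also have "\<dots> = 1" using sS_pos by (simp add: sum_divide_distrib[symmetric] sS_def)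
    finally show ?thesis .
  qed
  have uxpm: "u i * x i = pm i * h i" if "i < n" for i
    using that v_pos by (simp add: xh pm_def)
  have hnn: "pm i * h i \<ge> 0" if "i < n" for i
    using pm_pos[OF that] sS_pos by (simp add: h_def)
  show norm1: "(\<Sum>i<n. \<bar>u i * x i\<bar>) = 1"
    using sumS by (simp add: uxpm hnn)
  have cx: "(\<Sum>j<n. u j * x j) = 1" using sumS by (simp add: uxpm)
  have hb: "\<And>j. j < n \<Longrightarrow> 0 \<le> h j \<and> h j \<le> 1 / sS" using sS_pos by (simp add: h_def)
  have h0: "\<And>j. j \<in> {..<n} - S \<Longrightarrow> h j = 0" by (simp add: h_def)
  define b where "b m i = t^m / fact m * (P^^m) h i" for m i
  have expS: "summable (\<lambda>m. y^m / fact m * C)" for C y :: real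
    using summable_mult2[OF sums_summable[OF exp_sums_real]] by blast
  have sb: "summable (\<lambda>m. b m i)" if i: "i < n" for i
  proof (rule summable_comparison_test'[OF expS[of t "1 / sS"], where N=0])
    fix m :: nat
    have "0 \<le> (P^^m) h i \<and> (P^^m) h i \<le> 1 / sS" by (rule P_pow_bounds[OF hb i])
    moreover have "t^m / fact m \<ge> 0" using t by simp
    ultimately have "t^m / fact m * (P^^m) h i \<le> t^m / fact m * (1 / sS)" "0 \<le> t^m / fact m * (P^^m) h i"
      by (metis mult_left_mono, metis mult_nonneg_nonneg)
    then show "norm (b m i) \<le> t^m / fact m * (1 / sS)"
      by (simp add: b_def)
  qed
  define H where "H i = exp (-t) * (\<Sum>m. b m i)" for i
  have inner: "(\<Sum>j<n. (mat_exp n (\<lambda>a b. t * (R a b - id_mat a b)) i j - v i * u j) * x j) = v i * (H i - 1)"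
    if i: "i < n" for i
  proof -
    have split: "(\<Sum>j<n. (mat_exp n (\<lambda>a b. t * (R a b - id_mat a b)) i j - v i * u j) * x j)
        = (\<Sum>j<n. mat_exp n (\<lambda>a b. t * (R a b - id_mat a b)) i j * x j) - v i * (\<Sum>j<n. u j * x j)"
      by (simp add: left_diff_distrib sum_subtractf sum_distrib_left mult.assoc)
    have mvv: "mv n (mat_pow n R m) x i = v i * (P^^m) h i" for m
    proof -
      have "mv n (mat_pow n R m) x i = ((mv n R)^^m) (\<lambda>j. v j * h j) i" unfolding xh by (rule mv_pow[OF i])
      also have "\<dots> = v i * (P^^m) h i" by (rule iter_rel[OF P_rel P_cong' i])
      finally show ?thesis .
    qed
    have "(\<lambda>m. t^m / fact m * mv n (mat_pow n R m) x i) = (\<lambda>m. v i * b m i)"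
      by (intro ext) (simp add: mvv b_def algebra_simps)
    then have "(\<Sum>m. t^m / fact m * mv n (mat_pow n R m) x i) = v i * (\<Sum>m. b m i)"
      using suminf_mult[OF sb[OF i], of "v i"] by simp
    then show ?thesis unfolding split cx exp_expand(1) by (simp add: H_def algebra_simps)
  qed
  have err_eq: "(\<Sum>i<n. \<bar>u i * (\<Sum>j<n. (mat_exp n (\<lambda>a b. t * (R a b - id_mat a b)) i j - v i * u j) * x j)\<bar>)
       = (\<Sum>i<n. pm i * \<bar>H i - 1\<bar>)"
  proof (intro sum.cong refl)
    fix i assume "i \<in> {..<n}"
    then have i: "i < n" by simp
    have "u i > 0" "v i > 0" using u_pos v_pos i by auto
    then show "\<bar>u i * (\<Sum>j<n. (mat_exp n (\<lambda>a b. t * (R a b - id_mat a b)) i j - v i * u j) * x j)\<bar> = pm i * \<bar>H i - 1\<bar>"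
      by (simp add: inner[OF i] pm_def abs_mult)
  qed
  have swapH: "(\<Sum>i\<in>A. pm i * H i) = exp (-t) * (\<Sum>m. t^m / fact m * (\<Sum>i\<in>A. pm i * (P^^m) h i))"
    if A: "A \<subseteq> {..<n}" for A
  proof -
    have "(\<Sum>i\<in>A. pm i * H i) = exp (-t) * (\<Sum>i\<in>A. \<Sum>m. pm i * b m i)"
      unfolding H_def sum_distrib_left
      by (intro sum.cong refl) (use A sb in \<open>auto simp: suminf_mult[symmetric] algebra_simps\<close>)
    also have "(\<Sum>i\<in>A. \<Sum>m. pm i * b m i) = (\<Sum>m. \<Sum>i\<in>A. pm i * b m i)"
      by (rule suminf_sum[symmetric]) (use A sb in \<open>auto intro!: summable_mult\<close>)
    also have "\<dots> = (\<Sum>m. t^m / fact m * (\<Sum>i\<in>A. pm i * (P^^m) h i))"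
      by (simp add: b_def sum_distrib_left algebra_simps)
    finally show ?thesis .
  qed
  have total: "(\<Sum>i<n. pm i * H i) = 1"
  proof -
    have "(\<Sum>i<n. pm i * H i) = exp (-t) * (\<Sum>m. t^m / fact m * 1)"
      using swapH[of "{..<n}"] mean_P_pow[where g=h] sumS by (simp add: mean_def)
    also have "\<dots> = 1" using exp_sums_real[of t] by (simp add: sums_iff mult_exp_exp)
    finally show ?thesis .
  qed
  define K where "K = (\<Sum>i\<in>S. \<Sum>j\<in>{..<n}-S. Q i j) / sS"
  have K_eq: "K = edge_expansion_set n R u v S"
  proof -
    have den: "(\<Sum>i\<in>S. \<Sum>j<n. u i * R i j * v j) = sS"
      unfolding sS_def using S(2) by (intro sum.cong refl) (use Q_row in \<open>auto simp: Q_def\<close>)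
    show ?thesis unfolding edge_expansion_set_def den K_def by (simp add: Q_def)
  qed
  have out: "(\<Sum>i\<in>{..<n}-S. pm i * H i) \<le> t * K"
  proof -
    have "(\<Sum>i\<in>{..<n}-S. pm i * H i) = exp (-t) * (\<Sum>m. t^m / fact m * (\<Sum>i\<in>{..<n}-S. pm i * (P^^m) h i))"
      by (rule swapH) auto
    also have "(\<Sum>m. t^m / fact m * (\<Sum>i\<in>{..<n}-S. pm i * (P^^m) h i)) \<le> (\<Sum>m. t^m / fact m * real m * K)"
    proof (rule suminf_le)
      fix m
      show "t^m / fact m * (\<Sum>i\<in>{..<n}-S. pm i * (P^^m) h i) \<le> t^m / fact m * real m * K"
      proof -
        have ob: "(\<Sum>i\<in>{..<n}-S. pm i * (P^^m) h i) \<le> real m * K"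
          unfolding K_def by (rule out_bound) (use S(2) sS_pos hb h0 in auto)
        have "t^m / fact m \<ge> 0" using t by simp
        from mult_left_mono[OF ob this] show ?thesis by (simp add: mult.assoc)
      qed
      show "summable (\<lambda>m. t^m / fact m * (\<Sum>i\<in>{..<n}-S. pm i * (P^^m) h i))"
      proof -
        have "summable (\<lambda>m. \<Sum>i\<in>{..<n}-S. pm i * b m i)"
          by (intro summable_sum summable_mult sb) auto
        then show ?thesis by (simp add: b_def sum_distrib_left algebra_simps)
      qed
      show "summable (\<lambda>m. t^m / fact m * real m * K)"
        using sums_summable[OF sums_mult2[OF sums_m_exp[of t], of K]] by simp
    qed
    also have "(\<Sum>m. t^m / fact m * real m * K) = t * exp t * K"
      using sums_mult2[OF sums_m_exp[of t], of K] by (simp add: sums_iff)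
    finally show ?thesis using exp_gt_zero[of "-t"] by (simp add: mult_left_mono mult_exp_exp algebra_simps)
  qed
  have splitn: "\<And>F. (\<Sum>i<n. F i) = (\<Sum>i\<in>{..<n}-S. F i) + (\<Sum>i\<in>S. F i)"
    using S(2) by (simp add: sum.subset_diff[of S "{..<n}"])
  have "(\<Sum>i<n. pm i * \<bar>H i - 1\<bar>) \<ge> (\<Sum>i\<in>{..<n}-S. pm i * (1 - H i)) + (\<Sum>i\<in>S. pm i * (H i - 1))"
    unfolding splitn
  proof (intro add_mono sum_mono mult_left_mono)
    fix i assume "i \<in> {..<n} - S" then show "0 \<le> pm i" using pm_pos by (auto simp: less_imp_le)
  next
    fix i assume "i \<in> S" then show "0 \<le> pm i" using pm_pos S(2) by (auto simp: less_imp_le)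
  qed auto
  also have "(\<Sum>i\<in>{..<n}-S. pm i * (1 - H i)) + (\<Sum>i\<in>S. pm i * (H i - 1))
       = ((\<Sum>i\<in>{..<n}-S. pm i) - (\<Sum>i\<in>{..<n}-S. pm i * H i)) + ((\<Sum>i\<in>S. pm i * H i) - sS)"
    by (simp add: sS_def right_diff_distrib sum_subtractf)
  finally have e1: "(\<Sum>i<n. pm i * \<bar>H i - 1\<bar>) \<ge> ((\<Sum>i\<in>{..<n}-S. pm i) - (\<Sum>i\<in>{..<n}-S. pm i * H i)) + ((\<Sum>i\<in>S. pm i * H i) - sS)" .
  have e2: "(\<Sum>i\<in>{..<n}-S. pm i) + sS = 1" using sum_pm splitn[of pm] by (simp add: sS_def)
  have e3: "(\<Sum>i\<in>{..<n}-S. pm i * H i) + (\<Sum>i\<in>S. pm i * H i) = 1" using total splitn[of "\<lambda>i. pm i * H i"] by simp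
  show "1 - 2 * t * edge_expansion_set n R u v S \<le>
         (\<Sum>i<n. \<bar>u i * (\<Sum>j<n. (mat_exp n (\<lambda>a b. t * (R a b - id_mat a b)) i j - v i * u j) * x j)\<bar>)"
    unfolding err_eq K_eq[symmetric] using e1 e2 e3 out sS_half by linarith
qed

end


context chain begin

lemma nrm_g_bound:
  assumes norm1: "(\<Sum>i<n. \<bar>u i * x i\<bar>) = 1" and kpos: "\<kappa> > 0" and kle: "\<And>i. i < n \<Longrightarrow> \<kappa> \<le> pm i"
  shows "nrm (\<lambda>j. x j / v j - mean (\<lambda>j. x j / v j)) \<le> 1 / \<kappa>"
proof -
  define h where "h = (\<lambda>j. x j / v j)"
  define c where "c = mean h"
  have "nrm (\<lambda>j. h j - c) = (\<Sum>i<n. pm i * (h i)^2 - (2 * c) * (pm i * h i) + c^2 * pm i)"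
    unfolding nrm_def by (intro sum.cong refl) (simp add: power2_eq_square algebra_simps)
  also have "\<dots> = nrm h - (2 * c) * mean h + c^2 * (\<Sum>i<n. pm i)"
    unfolding sum.distrib sum_subtractf nrm_def mean_def sum_distrib_left ..
  also have "\<dots> = nrm h - c^2" using sum_pm by (simp add: c_def power2_eq_square)
  also have "\<dots> \<le> nrm h" by simp
  also have "nrm h \<le> (\<Sum>i<n. \<bar>u i * x i\<bar> / \<kappa>)"
    unfolding nrm_def
  proof (intro sum_mono)
    fix i assume "i \<in> {..<n}"
    then have i: "i < n" by simp
    have ui: "u i > 0" and vi: "v i > 0" using u_pos v_pos i by auto
    have eq: "\<bar>u i * x i\<bar> = pm i * \<bar>h i\<bar>" using ui vi by (simp add: pm_def h_def abs_mult)
    have "\<bar>u i * x i\<bar> \<le> 1" using norm1 member_le_sum[of i "{..<n}" "\<lambda>i. \<bar>u i * x i\<bar>"] i by simp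
    then have "pm i * \<bar>h i\<bar> \<le> 1" using eq by simp
    then have "\<kappa> * \<bar>h i\<bar> \<le> 1" using kle[OF i] by (meson abs_ge_zero mult_right_mono order_trans)
    then have hk: "\<bar>h i\<bar> \<le> 1 / \<kappa>" using kpos by (simp add: field_simps)
    have "pm i * (h i)^2 = (pm i * \<bar>h i\<bar>) * \<bar>h i\<bar>" by (simp add: power2_eq_square abs_mult_self_eq)
    also have "\<dots> \<le> (pm i * \<bar>h i\<bar>) * (1 / \<kappa>)"
      using hk pm_pos[OF i] by (intro mult_left_mono) auto
    finally show "pm i * (h i)^2 \<le> \<bar>u i * x i\<bar> / \<kappa>" using eq by simp
  qed
  also have "\<dots> = 1 / \<kappa>" using norm1 by (simp add: sum_divide_distrib[symmetric])
  finally show ?thesis by (simp add: h_def c_def)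
qed

end

theorem lemma3p10:
  fixes n :: nat and R :: "nat \<Rightarrow> nat \<Rightarrow> real" and u v :: "nat \<Rightarrow> real"
    and \<kappa> \<epsilon> :: real
  assumes nonneg: "\<forall>i<n. \<forall>j<n. R i j \<ge> 0"
    and u_pos: "\<forall>i<n. u i > 0" and v_pos: "\<forall>i<n. v i > 0"
    and left_eig: "\<forall>j<n. (\<Sum>i<n. u i * R i j) = u j"
    and right_eig: "\<forall>i<n. (\<Sum>j<n. R i j * v j) = v i"
    and normalized: "(\<Sum>i<n. u i * v i) = 1"
    and kappa_def: "\<kappa> = Min {u i * v i | i. i < n}"
    and eps: "0 < \<epsilon>" "\<epsilon> < 1"
  shows "(if edge_expansion n R u v = 0 then \<infinity>
          else ereal (1/2 - \<epsilon>) / edge_expansion n R u v) \<le> mixing_time_cont n R u v \<epsilon>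
       \<and> mixing_time_cont n R u v \<epsilon> \<le>
         (if edge_expansion n R u v = 0 then \<infinity>
          else ereal (100 * ln (real n / (\<kappa> * \<epsilon>))) / (edge_expansion n R u v)\<^sup>2)"
proof -
  interpret ch: chain n R u v
    by unfold_locales (use nonneg u_pos v_pos left_eig right_eig normalized in auto)
  define err where "err t x = (\<Sum>i<n. \<bar>u i * (\<Sum>j<n. (mat_exp n (\<lambda>a b. t * (R a b - id_mat a b)) i j - v i * u j) * x j)\<bar>)"
    for t x
  define adm where "adm S \<longleftrightarrow> S \<noteq> {} \<and> S \<subseteq> {..<n} \<and> (\<Sum>i\<in>S. u i * v i) \<le> 1/2" for S
  define ees where "ees S = edge_expansion_set n R u v S" for S
  define Set where "Set = {t. t \<ge> 0 \<and> (\<forall>x :: nat \<Rightarrow> real. (\<Sum>i<n. \<bar>u i * x i\<bar>) = 1 \<longrightarrow> err t x \<le> \<epsilon>)}"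
  have tau: "mixing_time_cont n R u v \<epsilon> = Inf (ereal ` Set)"
    by (simp add: mixing_time_cont_def Set_def err_def)
  define phiE where "phiE = edge_expansion n R u v"
  have phiE': "phiE = Inf {ereal (ees S) | S. adm S}"
    by (simp add: phiE_def edge_expansion_def adm_def ees_def)
  have lowerS: "phiE \<le> ereal (ees S)" if "adm S" for S
    unfolding phiE' by (rule Inf_lower) (use that in blast)
  have greatest: "ereal r \<le> phiE" if "\<And>S. adm S \<Longrightarrow> r \<le> ees S" for r
    unfolding phiE' by (rule Inf_greatest) (use that in auto)
  have ees_nn: "0 \<le> ees S" if "adm S" for S
  proof -
    have "0 \<le> u i * R i j * v j" if "i < n" "j < n" for i j
      using ch.Q_nonneg[OF that] by (simp add: ch.Q_def)
    then show ?thesis using that unfolding ees_def edge_expansion_set_def adm_def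
      by (intro divide_nonneg_nonneg sum_nonneg) auto
  qed
  have ees_le1: "ees S \<le> 1" if "adm S" for S
  proof -
    have fin: "finite S" and sub: "S \<subseteq> {..<n}" and ne: "S \<noteq> {}" using that finite_subset by (auto simp: adm_def)
    have den: "(\<Sum>i\<in>S. \<Sum>j<n. u i * R i j * v j) = (\<Sum>i\<in>S. ch.pm i)"
      using sub by (intro sum.cong refl) (use ch.Q_row in \<open>auto simp: ch.Q_def\<close>)
    have dpos: "(\<Sum>i\<in>S. ch.pm i) > 0" using ne fin sub ch.pm_pos by (intro sum_pos) auto
    have "(\<Sum>i\<in>S. \<Sum>j\<in>{..<n}-S. u i * R i j * v j) \<le> (\<Sum>i\<in>S. \<Sum>j<n. u i * R i j * v j)"
      using sub ch.Q_nonneg by (intro sum_mono sum_mono2) (auto simp: ch.Q_def)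
    then show ?thesis unfolding ees_def edge_expansion_set_def den using dpos by simp
  qed
  have gt: "1 - \<epsilon> \<le> 2 * t * ees S" if t: "t \<in> Set" and S: "adm S" for t S
  proof -
    have t0: "t \<ge> 0" using t by (simp add: Set_def)
    define x where "x = (\<lambda>j. if j \<in> S then v j / (\<Sum>i\<in>S. u i * v i) else 0)"
    have n1: "(\<Sum>i<n. \<bar>u i * x i\<bar>) = 1" unfolding x_def
      by (rule ch.lb_err(1)) (use S t0 in \<open>auto simp: adm_def\<close>)
    have "1 - 2 * t * ees S \<le> err t x" unfolding x_def err_def ees_def
      by (rule ch.lb_err(2)) (use S t0 in \<open>auto simp: adm_def\<close>)
    also have "err t x \<le> \<epsilon>" using t n1 by (simp add: Set_def)
    finally show ?thesis by simp
  qed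
  have adm_ex: "\<exists>S. adm S" if "phiE \<noteq> \<infinity>"
  proof (rule ccontr)
    assume "\<not> (\<exists>S. adm S)"
    then have "{ereal (ees S) | S. adm S} = {}" by auto
    then have "phiE = \<infinity>" unfolding phiE' by (simp add: top_ereal_def)
    with that show False by simp
  qed
  have tpos: "t > 0" if "t \<in> Set" "adm S" for t S
  proof -
    have "t \<ge> 0" using that by (simp add: Set_def)
    moreover have "t \<noteq> 0" using gt[OF that] eps by auto
    ultimately show ?thesis by simp
  qed
  have phi_ge: "ereal ((1 - \<epsilon>) / (2 * t)) \<le> phiE" if "t \<in> Set" "adm S0" for t S0
  proof (rule greatest)
    fix S assume "adm S"
    have "t > 0" by (rule tpos[OF that])
    then show "(1 - \<epsilon>) / (2 * t) \<le> ees S" using gt[OF that(1) \<open>adm S\<close>] by (simp add: field_simps)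
  qed
  have phi_nn: "0 \<le> phiE" using greatest[of 0] ees_nn by (simp add: zero_ereal_def)
  have LB: "(if phiE = 0 then \<infinity> else ereal (1/2 - \<epsilon>) / phiE) \<le> Inf (ereal ` Set)"
  proof (cases "phiE = 0")
    case True
    obtain S0 where S0: "adm S0" using adm_ex True by auto
    have "Set = {}"
    proof (rule ccontr)
      assume "Set \<noteq> {}"
      then obtain t where t: "t \<in> Set" by blast
      have "ereal ((1 - \<epsilon>) / (2 * t)) \<le> 0" using phi_ge[OF t S0] True by simp
      moreover have "(1 - \<epsilon>) / (2 * t) > 0" using tpos[OF t S0] eps by simp
      ultimately show False by simp
    qed
    then show ?thesis using True by (simp add: top_ereal_def)
  next
    case False
    show ?thesis unfolding if_not_P[OF False]
    proof (rule Inf_greatest)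
      fix e assume "e \<in> ereal ` Set"
      then obtain t where t: "t \<in> Set" and e: "e = ereal t" by blast
      have t0: "t \<ge> 0" using t by (simp add: Set_def)
      show "ereal (1/2 - \<epsilon>) / phiE \<le> e"
      proof (cases phiE)
        case (real \<phi>)
        obtain S0 where S0: "adm S0" using adm_ex real by auto
        have php: "\<phi> > 0" using phi_nn False real by simp
        have "(1 - \<epsilon>) / (2 * t) \<le> \<phi>" using phi_ge[OF t S0] real by simp
        then have "1 - \<epsilon> \<le> 2 * t * \<phi>" using tpos[OF t S0] by (simp add: field_simps)
        then have "(1/2 - \<epsilon>) / \<phi> \<le> t" using php eps by (simp add: field_simps)
        then show ?thesis using real php e by simp
      next
        case PInf then show ?thesis using e t0 by simp
      next
        case MInf then show ?thesis using phi_nn by simp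
      qed
    qed
  qed
  have UB: "Inf (ereal ` Set) \<le> (if phiE = 0 then \<infinity> else ereal (100 * ln (real n / (\<kappa> * \<epsilon>))) / phiE\<^sup>2)"
  proof (cases "phiE = 0")
    case True then show ?thesis by simp
  next
    case False
    show ?thesis unfolding if_not_P[OF False]
    proof (cases "\<exists>S. adm S")
      case False
      then have pinf: "phiE = \<infinity>" using adm_ex by blast
      have n1: "n = 1"
      proof (rule ccontr)
        assume "n \<noteq> 1"
        then have n2: "n \<ge> 2" using ch.n_pos by simp
        have "ch.pm 0 + ch.pm 1 \<le> (\<Sum>i<n. ch.pm i)"
        proof -
          have "(\<Sum>i\<in>{0,1}. ch.pm i) \<le> (\<Sum>i<n. ch.pm i)"
            using n2 ch.pm_pos by (intro sum_mono2) (auto simp: less_imp_le)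
          then show ?thesis by simp
        qed
        then have "ch.pm 0 \<le> 1/2 \<or> ch.pm 1 \<le> 1/2" using ch.sum_pm by linarith
        then have "adm {0} \<or> adm {1}" using n2 by (auto simp: adm_def ch.pm_def)
        with False show False by blast
      qed
      have "0 \<in> Set"
      proof -
        have "err 0 x \<le> \<epsilon>" for x
        proof -
          have contr: "\<And>f. ch.mean f = 0 \<Longrightarrow> ch.nrm (ch.T f) \<le> 1 * ch.nrm f"
          proof -
            fix f
            have "ch.nrm (ch.T f) \<le> ch.nrm f - ch.Ed f / 2" by (rule ch.nrm_T)
            moreover have "ch.Ed f \<ge> 0" by (rule ch.Ed_nonneg)
            ultimately show "ch.nrm (ch.T f) \<le> 1 * ch.nrm f" by simp
          qed
          have "err 0 x \<le> exp (- (2 * 0) * (1 - sqrt 1)) * sqrt (ch.nrm (\<lambda>j. x j / v j - ch.mean (\<lambda>j. x j / v j)))"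
            unfolding err_def by (rule ch.ub_err[OF contr]) auto
          also have "ch.nrm (\<lambda>j. x j / v j - ch.mean (\<lambda>j. x j / v j)) = 0"
          proof -
            have r: "{..<n} = {0}" using n1 by auto
            have "ch.pm 0 = 1" using ch.sum_pm unfolding r by simp
            then show ?thesis unfolding ch.nrm_def ch.mean_def r by simp
          qed
          finally show ?thesis using eps by simp
        qed
        then show ?thesis by (simp add: Set_def)
      qed
      then have "Inf (ereal ` Set) \<le> 0" by (metis Inf_lower image_eqI zero_ereal_def)
      then show "Inf (ereal ` Set) \<le> ereal (100 * ln (real n / (\<kappa> * \<epsilon>))) / phiE\<^sup>2"
        using pinf by (simp add: power2_eq_square)
    next
      case True
      then obtain S0 where S0: "adm S0" by blast
      have "phiE \<noteq> \<infinity>" using lowerS[OF S0] by auto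
      then obtain \<phi> where real: "phiE = ereal \<phi>" using phi_nn by (cases phiE) auto
      have php: "\<phi> > 0" using phi_nn False real by simp
      have phi1: "\<phi> \<le> 1" using lowerS[OF S0] ees_le1[OF S0] real by simp
      have phiH: "\<forall>S. S \<noteq> {} \<and> S \<subseteq> {..<n} \<and> (\<Sum>i\<in>S. u i * v i) \<le> 1/2 \<longrightarrow> \<phi> \<le> edge_expansion_set n R u v S"
        using lowerS real by (auto simp: adm_def ees_def)
      define \<rho> where "\<rho> = 1 - \<phi>^2/16"
      have rho0: "0 \<le> \<rho>" and rho1: "\<rho> \<le> 1"
      proof -
        have "\<phi>^2 \<le> 1" using php phi1 by (simp add: power_le_one)
        then show "0 \<le> \<rho>" "\<rho> \<le> 1" by (auto simp: \<rho>_def)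
      qed
      have contr: "\<And>f. ch.mean f = 0 \<Longrightarrow> ch.nrm (ch.T f) \<le> \<rho> * ch.nrm f"
        unfolding \<rho>_def by (rule ch.contraction[OF phiH]) (use php in auto)
      have finK: "finite {u i * v i | i. i < n}" by simp
      have neK: "{u i * v i | i. i < n} \<noteq> {}" using ch.n_pos by auto
      have kmem: "\<kappa> \<in> {u i * v i | i. i < n}" unfolding kappa_def using finK neK by (rule Min_in)
      have kpos: "\<kappa> > 0" using kmem ch.pm_pos by (auto simp: ch.pm_def)
      have kle: "\<And>i. i < n \<Longrightarrow> \<kappa> \<le> ch.pm i" unfolding kappa_def ch.pm_def using finK by (intro Min_le) auto
      have k1: "\<kappa> \<le> 1"
      proof -
        have "ch.pm 0 \<le> (\<Sum>i<n. ch.pm i)"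
          using ch.n_pos ch.pm_pos by (intro member_le_sum) (auto simp: less_imp_le)
        then show ?thesis using kle[OF ch.n_pos] ch.sum_pm by simp
      qed
      define L where "L = ln (real n / (\<kappa> * \<epsilon>))"
      have ke: "0 < \<kappa> * \<epsilon>" "\<kappa> * \<epsilon> \<le> 1" using kpos eps k1 by (auto intro: mult_le_one)
      have nge: "real n \<ge> 1" using ch.n_pos by simp
      have ratio: "real n / (\<kappa> * \<epsilon>) \<ge> 1" using ke nge by (simp add: field_simps)
      have L0: "L \<ge> 0" unfolding L_def using ratio by simp
      define T0 where "T0 = 100 * L / \<phi>^2"
      have T00: "T0 \<ge> 0" using L0 by (simp add: T0_def)
      have "T0 \<in> Set"
      proof -
        have "err T0 x \<le> \<epsilon>" if n1: "(\<Sum>i<n. \<bar>u i * x i\<bar>) = 1" for x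
        proof -
          have A: "err T0 x \<le> exp (- (2 * T0) * (1 - sqrt \<rho>)) * sqrt (ch.nrm (\<lambda>j. x j / v j - ch.mean (\<lambda>j. x j / v j)))"
            unfolding err_def by (rule ch.ub_err[OF contr rho0 rho1 T00])
          have B: "sqrt (ch.nrm (\<lambda>j. x j / v j - ch.mean (\<lambda>j. x j / v j))) \<le> sqrt (1 / \<kappa>)"
            using ch.nrm_g_bound[OF n1 kpos kle] by simp
          have C: "exp (- (2 * T0) * (1 - sqrt \<rho>)) \<le> exp (- L)"
          proof -
            have sq: "sqrt \<rho> \<le> 1 - \<phi>^2/32"
            proof -
              have "(sqrt \<rho>)^2 = \<rho>" using rho0 by simp
              moreover have "(1 - \<phi>^2/32)^2 = \<rho> + (\<phi>^2/32)^2" by (simp add: \<rho>_def power2_eq_square algebra_simps)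
              moreover have "1 - \<phi>^2/32 \<ge> 0" using rho0 \<rho>_def by simp
              ultimately show ?thesis
                by (metis abs_of_nonneg le_add_same_cancel1 real_le_rsqrt real_sqrt_abs zero_le_power2 real_sqrt_le_mono power2_eq_square)
            qed
            have "2 * T0 * (1 - sqrt \<rho>) \<ge> 2 * T0 * (\<phi>^2/32)"
              using sq T00 by (intro mult_left_mono) auto
            moreover have "2 * T0 * (\<phi>^2/32) = 100 / 16 * L" using php by (simp add: T0_def field_simps)
            moreover have "100 / 16 * L \<ge> L" using L0 by simp
            ultimately show ?thesis by simp
          qed
          have D: "exp (- L) = \<kappa> * \<epsilon> / real n"
          proof -
            have "exp L = real n / (\<kappa> * \<epsilon>)" unfolding L_def using ratio by (intro exp_ln) simp
            then show ?thesis by (simp add: exp_minus)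
          qed
          have F: "\<kappa> * \<epsilon> / real n * sqrt (1 / \<kappa>) \<le> \<epsilon>"
          proof -
            have "\<kappa> * \<epsilon> * 1 \<le> \<kappa> * \<epsilon> * real n" using ke nge by (intro mult_left_mono) auto
            then have "\<kappa> * \<epsilon> / real n \<le> \<kappa> * \<epsilon>" using ke nge by (simp add: divide_le_eq)
            moreover have "\<kappa> * sqrt (1 / \<kappa>) \<le> 1"
            proof -
              have "\<kappa> * sqrt (1 / \<kappa>) = sqrt \<kappa>" using kpos
                by (metis real_div_sqrt real_sqrt_divide real_sqrt_one div_by_1 less_imp_le times_divide_eq_right mult_1_right)
              also have "\<dots> \<le> 1" using k1 by simp
              finally show ?thesis .
            qed
            ultimately have "\<kappa> * \<epsilon> / real n * sqrt (1 / \<kappa>) \<le> \<kappa> * \<epsilon> * sqrt (1 / \<kappa>)"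
              using kpos by (intro mult_right_mono) auto
            also have "\<dots> = \<epsilon> * (\<kappa> * sqrt (1 / \<kappa>))" by simp
            also have "\<dots> \<le> \<epsilon>" using \<open>\<kappa> * sqrt (1 / \<kappa>) \<le> 1\<close> eps
              by (simp add: mult_left_le)
            finally show ?thesis .
          qed
          have "exp (- (2 * T0) * (1 - sqrt \<rho>)) * sqrt (ch.nrm (\<lambda>j. x j / v j - ch.mean (\<lambda>j. x j / v j)))
              \<le> exp (- L) * sqrt (1 / \<kappa>)"
            by (rule mult_mono[OF C B]) (auto simp: ch.nrm_nonneg)
          with A D F show ?thesis by simp
        qed
        then show ?thesis using T00 by (simp add: Set_def)
      qed
      then have "Inf (ereal ` Set) \<le> ereal T0" by (simp add: Inf_lower)
      also have "ereal T0 = ereal (100 * ln (real n / (\<kappa> * \<epsilon>))) / phiE\<^sup>2"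
        using real php by (simp add: T0_def L_def power2_eq_square)
      finally show "Inf (ereal ` Set) \<le> ereal (100 * ln (real n / (\<kappa> * \<epsilon>))) / phiE\<^sup>2" .
    qed
  qed
  show ?thesis using LB UB unfolding tau phiE_def by simp
qed


end
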